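(* Let $G$ be a finite simple connected graph with at least one edge and $s\ge 0$. The vanishing ideal of the $s$-order principal component of $G$ is the edge ideal of the graph $PC_s(G)$ whose vertex set is $\{x^{(i)} : x\in V(G),\ 0\le i\le s\}$ and whose edge set is $\{\{x^{(i)},y^{(j)}\} : \{x,y\}\in E(G),\ 0\le i,j\le s\}$.
   Context: $R=k[x_1,\dots,x_n]$ over an algebraically closed field $k$, vertices of $G$ identified with variables; $\mathcal{J}_s(R)=k[x_i^{(l)} : 1\le i\le n,\ 0\le l\le s]$. The edge ideal of a graph $H$ on variables is $\langle uv : \{u,v\}\in E(H)\rangle$. The $s$-order principal component of $G$: with $X=\mathcal{V}(I(G))$, jet scheme $\mathcal{J}_s(X)=\mathcal{V}(\mathcal{J}_s(I(G)))\subseteq\mathbb{A}^{n(s+1)}$ (where $\mathcal{J}_s(I)$ is generated by the coefficients of $t^0,\dots,t^s$ of the generators of $I$ after substituting $x_i\mapsto\sum_{l=0}^s x_i^{(l)}t^l$ modulo $t^{s+1}$), and projection $\pi_s$ to the order-$0$ coordinates, it is the Zariski closure of $\pi_s^{-1}(X_{smooth})$, $X_{smooth}$ being the smooth locus of $X$. *)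

theory Defs
  imports "HOL-Library.Poly_Mapping" "HOL-Library.Function_Algebras"
          "HOL-Computational_Algebra.Polynomial"
begin

type_synonym ('x, 'k) mpoly = "('x \<Rightarrow>\<^sub>0 nat) \<Rightarrow>\<^sub>0 'k"

definition mp_eval_with :: "('k \<Rightarrow> 'b::comm_ring_1) \<Rightarrow> ('x, 'k::zero) mpoly \<Rightarrow> ('x \<Rightarrow> 'b) \<Rightarrow> 'b" where
  "mp_eval_with phi f a =
     (\<Sum>m\<in>Poly_Mapping.keys f. phi (Poly_Mapping.lookup f m) *
        (\<Prod>x\<in>Poly_Mapping.keys m. a x ^ Poly_Mapping.lookup m x))"

definition mp_eval :: "('x, 'k::comm_ring_1) mpoly \<Rightarrow> ('x \<Rightarrow> 'k) \<Rightarrow> 'k" where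
  "mp_eval f a = mp_eval_with (\<lambda>c. c) f a"

definition mp_vars :: "('x, 'k::zero) mpoly \<Rightarrow> 'x set" where
  "mp_vars f = (\<Union>m\<in>Poly_Mapping.keys f. Poly_Mapping.keys m)"

definition polys :: "'x set \<Rightarrow> ('x, 'k::zero) mpoly set" where
  "polys Vars = {f. mp_vars f \<subseteq> Vars}"

definition aff_space :: "'x set \<Rightarrow> ('x \<Rightarrow> 'k::zero) set" where
  "aff_space Vars = {a. \<forall>x. x \<notin> Vars \<longrightarrow> a x = 0}"

definition zero_set :: "'x set \<Rightarrow> ('x, 'k::comm_ring_1) mpoly set \<Rightarrow> ('x \<Rightarrow> 'k) set" where
  "zero_set Vars F = {a \<in> aff_space Vars. \<forall>f\<in>F. mp_eval f a = 0}"

definition vanishing_ideal :: "'x set \<Rightarrow> ('x \<Rightarrow> 'k::comm_ring_1) set \<Rightarrow> ('x, 'k) mpoly set" where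
  "vanishing_ideal Vars S = {f \<in> polys Vars. \<forall>a\<in>S. mp_eval f a = 0}"

definition zariski_closure :: "'x set \<Rightarrow> ('x \<Rightarrow> 'k::comm_ring_1) set \<Rightarrow> ('x \<Rightarrow> 'k) set" where
  "zariski_closure Vars S = zero_set Vars (vanishing_ideal Vars S)"

definition zariski_closed :: "'x set \<Rightarrow> ('x \<Rightarrow> 'k::comm_ring_1) set \<Rightarrow> bool" where
  "zariski_closed Vars Z \<longleftrightarrow> Z \<subseteq> aff_space Vars \<and> zariski_closure Vars Z = Z"

definition zariski_irreducible :: "'x set \<Rightarrow> ('x \<Rightarrow> 'k::comm_ring_1) set \<Rightarrow> bool" where
  "zariski_irreducible Vars Z \<longleftrightarrow> zariski_closed Vars Z \<and> Z \<noteq> {} \<and>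
     (\<forall>Z1 Z2. zariski_closed Vars Z1 \<and> zariski_closed Vars Z2 \<and> Z = Z1 \<union> Z2
        \<longrightarrow> Z1 = Z \<or> Z2 = Z)"

definition ideal_gen :: "'x set \<Rightarrow> ('x, 'k::comm_ring_1) mpoly set \<Rightarrow> ('x, 'k) mpoly set" where
  "ideal_gen Vars F = {f. \<exists>S c. finite S \<and> S \<subseteq> F \<and> (\<forall>g\<in>S. c g \<in> polys Vars) \<and>
                              f = (\<Sum>g\<in>S. c g * g)}"

definition local_dim :: "'x set \<Rightarrow> ('x \<Rightarrow> 'k::comm_ring_1) set \<Rightarrow> ('x \<Rightarrow> 'k) \<Rightarrow> nat" where
  "local_dim Vars X p = Sup {r. \<exists>Z :: nat \<Rightarrow> ('x \<Rightarrow> 'k) set.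
      p \<in> Z 0 \<and> (\<forall>i\<le>r. zariski_irreducible Vars (Z i) \<and> Z i \<subseteq> X) \<and>
      (\<forall>i<r. Z i \<subset> Z (Suc i))}"

(* Differential of f at p applied to the tangent vector w: the coefficient of t in
  f(p + t w) (first-order Taylor coefficient = sum of partial derivatives times w). *)
definition mp_differential :: "('x, 'k::comm_ring_1) mpoly \<Rightarrow> ('x \<Rightarrow> 'k) \<Rightarrow> ('x \<Rightarrow> 'k) \<Rightarrow> 'k" where
  "mp_differential f p w = coeff (mp_eval_with (\<lambda>c. [:c:]) f (\<lambda>x. [:p x, w x:])) 1"

definition tangent_space :: "'x set \<Rightarrow> ('x \<Rightarrow> 'k::comm_ring_1) set \<Rightarrow> ('x \<Rightarrow> 'k) \<Rightarrow> ('x \<Rightarrow> 'k) set" where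
  "tangent_space Vars X p = {w \<in> aff_space Vars.
      \<forall>f\<in>vanishing_ideal Vars X. mp_differential f p w = 0}"

definition smooth_locus :: "'x set \<Rightarrow> ('x \<Rightarrow> 'k::field) set \<Rightarrow> ('x \<Rightarrow> 'k) set" where
  "smooth_locus Vars X = {p \<in> X.
      vector_space.dim (\<lambda>c (w :: 'x \<Rightarrow> 'k). (\<lambda>x. c * w x)) (tangent_space Vars X p)
      = local_dim Vars X p}"

(* Jet variables x_i^(l), 0 <le> l <le> s, encoded as pairs (x_i, l). *)
definition jet_vars :: "nat \<Rightarrow> ('v \<times> nat) set" where
  "jet_vars s = {(v, l). l \<le> s}"

definition jet_arc :: "nat \<Rightarrow> ('v \<times> nat \<Rightarrow> 'k::comm_ring_1) \<Rightarrow> 'v \<Rightarrow> 'k poly" where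
  "jet_arc s a v = (\<Sum>l\<le>s. monom (a (v, l)) l)"

(* Jet scheme J_s(V(F)) = V(J_s(F)): the common zeros of the coefficients of
  t^0..t^s of the generators g <in> F after substituting the arc. *)
definition jet_scheme :: "nat \<Rightarrow> ('v, 'k::comm_ring_1) mpoly set \<Rightarrow> ('v \<times> nat \<Rightarrow> 'k) set" where
  "jet_scheme s F = {a \<in> aff_space (jet_vars s).
      \<forall>g\<in>F. \<forall>l\<le>s. coeff (mp_eval_with (\<lambda>c. [:c:]) g (jet_arc s a)) l = 0}"

definition jet_proj :: "('v \<times> nat \<Rightarrow> 'k) \<Rightarrow> 'v \<Rightarrow> 'k" where
  "jet_proj a = (\<lambda>v. a (v, 0))"

definition mp_xy :: "'x \<Rightarrow> 'x \<Rightarrow> ('x, 'k::comm_ring_1) mpoly" where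
  "mp_xy x y = Poly_Mapping.single (Poly_Mapping.single x 1 + Poly_Mapping.single y 1) 1"

definition edge_gens :: "('x \<Rightarrow> 'x \<Rightarrow> bool) \<Rightarrow> ('x, 'k::comm_ring_1) mpoly set" where
  "edge_gens E = {mp_xy x y | x y. E x y}"

definition principal_component :: "nat \<Rightarrow> ('v \<Rightarrow> 'v \<Rightarrow> bool) \<Rightarrow> ('v \<times> nat \<Rightarrow> 'k::field) set" where
  "principal_component s E =
     (let X = zero_set UNIV (edge_gens E :: ('v, 'k) mpoly set) in
      zariski_closure (jet_vars s)
        {a \<in> jet_scheme s (edge_gens E). jet_proj a \<in> smooth_locus UNIV X})"

definition PC_edges :: "nat \<Rightarrow> ('v \<Rightarrow> 'v \<Rightarrow> bool) \<Rightarrow> ('v \<times> nat) \<Rightarrow> ('v \<times> nat) \<Rightarrow> bool" where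
  "PC_edges s E = (\<lambda>(x, i) (y, j). E x y \<and> i \<le> s \<and> j \<le> s)"

end

theory Submission
  imports Defs "HOL-Library.FuncSet"
begin


definition mon :: "('x \<Rightarrow>\<^sub>0 nat) \<Rightarrow> ('x \<Rightarrow> 'k::comm_ring_1) \<Rightarrow> 'k" where
  "mon m a = (\<Prod>x\<in>Poly_Mapping.keys m. a x ^ Poly_Mapping.lookup m x)"

lemma mon_superset:
  assumes "finite K" "Poly_Mapping.keys m \<subseteq> K"
  shows "mon m a = (\<Prod>x\<in>K. a x ^ Poly_Mapping.lookup m x)"
  unfolding mon_def
  by (rule prod.mono_neutral_left[OF assms]) (auto simp: in_keys_iff)

lemma mon_zero[simp]: "mon 0 a = 1"
  by (simp add: mon_def)

lemma mon_add: "mon (m1 + m2) a = mon m1 a * mon m2 a"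
proof -
  let ?K = "Poly_Mapping.keys m1 \<union> Poly_Mapping.keys m2"
  have "mon (m1 + m2) a = (\<Prod>x\<in>?K. a x ^ Poly_Mapping.lookup (m1+m2) x)"
    by (rule mon_superset) (use keys_add[of m1 m2] in auto)
  also have "\<dots> = (\<Prod>x\<in>?K. a x ^ Poly_Mapping.lookup m1 x) * (\<Prod>x\<in>?K. a x ^ Poly_Mapping.lookup m2 x)"
    by (simp add: lookup_add power_add prod.distrib)
  also have "\<dots> = mon m1 a * mon m2 a"
    by (simp add: mon_superset[symmetric])
  finally show ?thesis .
qed

lemma mp_eval_mon: "mp_eval f a = (\<Sum>m\<in>Poly_Mapping.keys f. Poly_Mapping.lookup f m * mon m a)"
  by (simp add: mp_eval_def mp_eval_with_def mon_def)

lemma eval_superset: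
  assumes "finite M" "Poly_Mapping.keys f \<subseteq> M"
  shows "mp_eval f a = (\<Sum>m\<in>M. Poly_Mapping.lookup f m * mon m a)"
  unfolding mp_eval_mon
  by (rule sum.mono_neutral_left[OF assms]) (auto simp: in_keys_iff)

lemma eval_add: "mp_eval (f + g) a = mp_eval f a + mp_eval g a"
proof -
  let ?M = "Poly_Mapping.keys f \<union> Poly_Mapping.keys g"
  have "mp_eval (f + g) a = (\<Sum>m\<in>?M. Poly_Mapping.lookup (f+g) m * mon m a)"
    by (rule eval_superset) (use keys_add[of f g] in auto)
  also have "\<dots> = (\<Sum>m\<in>?M. Poly_Mapping.lookup f m * mon m a) + (\<Sum>m\<in>?M. Poly_Mapping.lookup g m * mon m a)"
    by (simp add: lookup_add distrib_right sum.distrib)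
  also have "\<dots> = mp_eval f a + mp_eval g a"
    by (simp add: eval_superset[symmetric])
  finally show ?thesis .
qed

lemma eval_zero[simp]: "mp_eval 0 a = 0"
  by (simp add: mp_eval_mon)

lemma eval_sum: "mp_eval (\<Sum>i\<in>I. f i) a = (\<Sum>i\<in>I. mp_eval (f i) a)"
  by (induction I rule: infinite_finite_induct) (auto simp: eval_add)

lemma mp_eval_single: "mp_eval (Poly_Mapping.single m c) a = c * mon m a"
  by (simp add: mp_eval_mon)

lemma pm_expand: "f = (\<Sum>m\<in>Poly_Mapping.keys f. Poly_Mapping.single m (Poly_Mapping.lookup f m))"
proof (rule poly_mapping_eqI)
  fix k
  show "Poly_Mapping.lookup f k = Poly_Mapping.lookup (\<Sum>m\<in>Poly_Mapping.keys f. Poly_Mapping.single m (Poly_Mapping.lookup f m)) k"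
    by (simp add: lookup_sum lookup_single when_def in_keys_iff)
qed

lemma eval_mult: "mp_eval (f * g) a = mp_eval f a * (mp_eval g a :: 'k::comm_ring_1)"
proof -
  let ?F = "Poly_Mapping.keys f" and ?G = "Poly_Mapping.keys g"
  have "f * g = (\<Sum>m\<in>?F. Poly_Mapping.single m (Poly_Mapping.lookup f m)) * (\<Sum>m\<in>?G. Poly_Mapping.single m (Poly_Mapping.lookup g m))"
    by (subst pm_expand[of f], subst pm_expand[of g]) (rule refl)
  also have "\<dots> = (\<Sum>m\<in>?F. \<Sum>m'\<in>?G. Poly_Mapping.single (m + m') (Poly_Mapping.lookup f m * Poly_Mapping.lookup g m'))"
    by (simp add: sum_distrib_left sum_distrib_right mult_single) (rule sum.swap)
  finally have "mp_eval (f * g) a = (\<Sum>m\<in>?F. \<Sum>m'\<in>?G. Poly_Mapping.lookup f m * Poly_Mapping.lookup g m' * mon (m + m') a)"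
    by (simp add: eval_sum mp_eval_single)
  also have "\<dots> = (\<Sum>m\<in>?F. Poly_Mapping.lookup f m * mon m a) * (\<Sum>m'\<in>?G. Poly_Mapping.lookup g m' * mon m' a)"
    by (simp add: sum_distrib_left sum_distrib_right mon_add mult_ac) (subst sum.swap, simp add: mult_ac)
  finally show ?thesis by (simp add: mp_eval_mon)
qed

lemma eval_line:
  "poly (mp_eval_with (\<lambda>c. [:c:]) f (\<lambda>x. [:p x, w x:])) t = mp_eval f (\<lambda>x. p x + t * w x)"
  by (simp add: mp_eval_def mp_eval_with_def poly_sum poly_prod poly_power algebra_simps)

lemma keys_mp_xy:
  assumes "x \<noteq> y"
  shows "Poly_Mapping.keys (Poly_Mapping.single x (1::nat) + Poly_Mapping.single y 1) = {x, y}"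
    and "Poly_Mapping.lookup (Poly_Mapping.single x (1::nat) + Poly_Mapping.single y 1) x = 1"
    and "Poly_Mapping.lookup (Poly_Mapping.single x (1::nat) + Poly_Mapping.single y 1) y = 1"
  using assms by (auto simp: in_keys_iff lookup_add lookup_single when_def split: if_splits)

lemma eval_with_mp_xy:
  assumes "x \<noteq> y"
  shows "mp_eval_with phi (mp_xy x y :: ('x, 'k::comm_ring_1) mpoly) a = phi 1 * (a x * a y)"
  using assms keys_mp_xy[OF assms]
  by (simp add: mp_eval_with_def mp_xy_def)

lemma eval_mp_xy:
  assumes "x \<noteq> y"
  shows "mp_eval (mp_xy x y :: ('x, 'k::comm_ring_1) mpoly) a = a x * a y"
  using eval_with_mp_xy[OF assms, of "\<lambda>c. c"] by (simp add: mp_eval_def)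

lemma vars_mp_xy:
  assumes "x \<noteq> y"
  shows "mp_vars (mp_xy x y :: ('x, 'k::comm_ring_1) mpoly) = {x, y}"
  using keys_mp_xy[OF assms] by (simp add: mp_vars_def mp_xy_def)

lemma vars_add: "mp_vars (f + g) \<subseteq> mp_vars f \<union> mp_vars g"
  unfolding mp_vars_def using keys_add[of f g] by auto

lemma vars_mult: "mp_vars (f * g) \<subseteq> mp_vars f \<union> mp_vars (g :: ('x, 'k::comm_ring_1) mpoly)"
proof
  fix x assume "x \<in> mp_vars (f * g)"
  then obtain m where m: "m \<in> Poly_Mapping.keys (f * g)" "x \<in> Poly_Mapping.keys m"
    by (auto simp: mp_vars_def)
  then obtain m1 m2 where "m = m1 + m2" "m1 \<in> Poly_Mapping.keys f" "m2 \<in> Poly_Mapping.keys g"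
    using keys_mult[of f g] by blast
  with m show "x \<in> mp_vars f \<union> mp_vars g"
    using keys_add[of m1 m2] by (auto simp: mp_vars_def)
qed

lemma vars_sum: "mp_vars (\<Sum>i\<in>I. f i) \<subseteq> (\<Union>i\<in>I. mp_vars (f i))"
proof (induction I rule: infinite_finite_induct)
  case (insert x F)
  then show ?case using vars_add[of "f x" "sum f F"] by auto
qed (auto simp: mp_vars_def)

lemma polys_add: "f \<in> polys V \<Longrightarrow> g \<in> polys V \<Longrightarrow> f + g \<in> polys V"
  using vars_add[of f g] by (auto simp: polys_def)
lemma polys_mult: "f \<in> polys V \<Longrightarrow> g \<in> polys V \<Longrightarrow> (f * g :: ('x, 'k::comm_ring_1) mpoly) \<in> polys V"
  using vars_mult by (fastforce simp: polys_def)
lemma polys_sum: "(\<And>i. i \<in> I \<Longrightarrow> f i \<in> polys V) \<Longrightarrow> (\<Sum>i\<in>I. f i) \<in> polys V"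
  using vars_sum[of f I] by (fastforce simp: polys_def)


lemma infinite_alg_closed: "infinite (UNIV :: 'k::alg_closed_field set)"
proof
  assume fin: "finite (UNIV :: 'k set)"
  define p :: "'k poly" where "p = (\<Prod>a\<in>UNIV. [:- a, 1:]) + 1"
  have dprod: "degree (\<Prod>a\<in>(UNIV::'k set). [:- a, 1:]) = card (UNIV :: 'k set)"
    by (subst degree_prod_eq_sum_degree) auto
  have "card (UNIV :: 'k set) > 0" using fin by (simp add: finite_UNIV_card_ge_0)
  then have "degree p > 0"
    unfolding p_def using dprod by (simp add: degree_add_eq_left)
  then obtain x where "poly p x = 0" using alg_closed_imp_poly_has_root by blast
  moreover have "poly (\<Prod>a\<in>(UNIV::'k set). [:- a, 1:]) x = 0"
    by (simp add: poly_prod fin)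
  ultimately show False by (simp add: p_def)
qed

lemma poly_eq_0_if_all_roots:
  assumes "infinite (UNIV :: 'k::idom set)" "\<And>t. poly P t = (0::'k)"
  shows "P = 0"
proof (rule ccontr)
  assume "P \<noteq> 0"
  then have "finite {t. poly P t = 0}" by (rule poly_roots_finite)
  with assms show False by simp
qed

lemma poly_nonzero_point:
  assumes "infinite (UNIV :: 'k::idom set)" "P \<noteq> (0::'k poly)"
  obtains t where "poly P t \<noteq> 0"
  using poly_eq_0_if_all_roots[OF assms(1)] assms(2) by blast

lemma zero_set_subset_aff: "zero_set V F \<subseteq> aff_space V"
  by (auto simp: zero_set_def)

lemma zero_set_antimono: "F \<subseteq> G \<Longrightarrow> zero_set V G \<subseteq> zero_set V F"
  by (auto simp: zero_set_def)

lemma subset_closure: "S \<subseteq> aff_space V \<Longrightarrow> S \<subseteq> zariski_closure V S"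
  by (auto simp: zariski_closure_def zero_set_def vanishing_ideal_def)

lemma zero_set_closed:
  assumes "F \<subseteq> polys V"
  shows "zariski_closed V (zero_set V F)"
proof -
  have "F \<subseteq> vanishing_ideal V (zero_set V F)"
    using assms by (auto simp: vanishing_ideal_def zero_set_def)
  then have "zariski_closure V (zero_set V F) \<subseteq> zero_set V F"
    unfolding zariski_closure_def by (rule zero_set_antimono)
  moreover have "zero_set V F \<subseteq> zariski_closure V (zero_set V F)"
    by (rule subset_closure[OF zero_set_subset_aff])
  ultimately show ?thesis
    unfolding zariski_closed_def using zero_set_subset_aff by blast
qed

lemma closed_eq: "zariski_closed V Z \<Longrightarrow> zero_set V (vanishing_ideal V Z) = Z"
  by (simp add: zariski_closed_def zariski_closure_def)

lemma vanishing_ideal_polys: "vanishing_ideal V Z \<subseteq> polys V"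
  by (auto simp: vanishing_ideal_def)

lemma closed_not_in:
  assumes "zariski_closed V Z" "b \<in> aff_space V" "b \<notin> Z"
  obtains f where "f \<in> vanishing_ideal V Z" "mp_eval f b \<noteq> 0"
proof -
  from assms have "b \<notin> zero_set V (vanishing_ideal V Z)" by (simp add: closed_eq)
  with assms(2) show ?thesis using that by (auto simp: zero_set_def)
qed

lemma closed_inter_hyper:
  assumes "zariski_closed V Z" "f \<in> polys V"
  shows "zariski_closed V {a \<in> Z. mp_eval f a = 0}"
proof -
  have "{a \<in> Z. mp_eval f a = 0} = zero_set V (insert f (vanishing_ideal V Z))"
    using closed_eq[OF assms(1)] by (auto simp: zero_set_def)
  then show ?thesis
    using assms vanishing_ideal_polys[of V Z] by (simp add: zero_set_closed)
qed

lemma irreducible_prime: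
  fixes Z :: "('x \<Rightarrow> 'k::idom) set"
  assumes irr: "zariski_irreducible V Z" and f: "f \<in> polys V" and q: "q \<in> polys V"
    and prod0: "\<And>a. a \<in> Z \<Longrightarrow> mp_eval f a * mp_eval q a = 0"
  shows "(\<forall>a\<in>Z. mp_eval f a = 0) \<or> (\<forall>a\<in>Z. mp_eval q a = 0)"
proof -
  have cl: "zariski_closed V Z" using irr by (simp add: zariski_irreducible_def)
  let ?Z1 = "{a \<in> Z. mp_eval f a = 0}" and ?Z2 = "{a \<in> Z. mp_eval q a = 0}"
  have "mp_eval f a = 0 \<or> mp_eval q a = 0" if "a \<in> Z" for a
    using prod0[OF that] by simp
  then have "Z = ?Z1 \<union> ?Z2" by blast
  moreover have "zariski_closed V ?Z1" "zariski_closed V ?Z2"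
    using closed_inter_hyper[OF cl] f q by auto
  moreover have "\<forall>Z1 Z2. zariski_closed V Z1 \<and> zariski_closed V Z2 \<and> Z = Z1 \<union> Z2
        \<longrightarrow> Z1 = Z \<or> Z2 = Z" using irr unfolding zariski_irreducible_def by blast
  ultimately have "?Z1 = Z \<or> ?Z2 = Z" by blast
  then show ?thesis by blast
qed

lemma line_irreducible:
  fixes Z :: "('x \<Rightarrow> 'k::idom) set"
  assumes inf: "infinite (UNIV :: 'k set)"
    and cl: "zariski_closed V Z" and ne: "Z \<noteq> {}"
    and line: "\<And>a b t. a \<in> Z \<Longrightarrow> b \<in> Z \<Longrightarrow> (\<lambda>x. a x + t * (b x - a x)) \<in> Z"
  shows "zariski_irreducible V Z"
  unfolding zariski_irreducible_def
proof (intro conjI cl ne allI impI)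
  fix Z1 Z2 assume H: "zariski_closed V Z1 \<and> zariski_closed V Z2 \<and> Z = Z1 \<union> Z2"
  show "Z1 = Z \<or> Z2 = Z"
  proof (rule ccontr)
    assume "\<not> (Z1 = Z \<or> Z2 = Z)"
    then obtain b1 b2 where b1: "b1 \<in> Z" "b1 \<notin> Z1" and b2: "b2 \<in> Z" "b2 \<notin> Z2"
      using H by blast
    have aff: "Z \<subseteq> aff_space V" using cl by (simp add: zariski_closed_def)
    obtain f1 where f1: "f1 \<in> vanishing_ideal V Z1" "mp_eval f1 b1 \<noteq> 0"
      using closed_not_in[of V Z1 b1] H b1 aff by blast
    obtain f2 where f2: "f2 \<in> vanishing_ideal V Z2" "mp_eval f2 b2 \<noteq> 0"
      using closed_not_in[of V Z2 b2] H b2 aff by blast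
    define P1 where "P1 = mp_eval_with (\<lambda>c. [:c:]) f1 (\<lambda>x. [:b1 x, b2 x - b1 x:])"
    define P2 where "P2 = mp_eval_with (\<lambda>c. [:c:]) f2 (\<lambda>x. [:b1 x, b2 x - b1 x:])"
    have e1: "poly P1 t = mp_eval f1 (\<lambda>x. b1 x + t * (b2 x - b1 x))" for t
      unfolding P1_def by (rule eval_line)
    have e2: "poly P2 t = mp_eval f2 (\<lambda>x. b1 x + t * (b2 x - b1 x))" for t
      unfolding P2_def by (rule eval_line)
    have "poly P1 0 \<noteq> 0" using e1[of 0] f1 by simp
    then have "P1 \<noteq> 0" by auto
    moreover have "poly P2 1 \<noteq> 0" using e2[of 1] f2 by simp
    then have "P2 \<noteq> 0" by auto
    ultimately have "P1 * P2 \<noteq> 0" by simp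
    then obtain t where t: "poly (P1 * P2) t \<noteq> 0" using poly_nonzero_point[OF inf] by blast
    have "(\<lambda>x. b1 x + t * (b2 x - b1 x)) \<in> Z" using line b1 b2 by blast
    then have "(\<lambda>x. b1 x + t * (b2 x - b1 x)) \<in> Z1 \<or> (\<lambda>x. b1 x + t * (b2 x - b1 x)) \<in> Z2"
      using H by blast
    then have "poly P1 t = 0 \<or> poly P2 t = 0"
      using f1 f2 e1 e2 by (auto simp: vanishing_ideal_def)
    with t show False by simp
  qed
qed


lemma pd: "(K+1::nat)^(Suc n) \<le> K^(Suc n) + Suc n * (K+1)^n"
proof (induction n)
  case 0 then show ?case by simp
next
  case (Suc n)
  have "(K+1::nat)^(Suc (Suc n)) = (K+1) * (K+1)^(Suc n)" by simp
  also have "\<dots> \<le> (K+1) * (K^(Suc n) + Suc n * (K+1)^n)"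
    using Suc.IH by (rule mult_left_mono) simp
  also have "\<dots> = K^(Suc (Suc n)) + K^(Suc n) + Suc n * (K+1)^(Suc n)"
    by (simp add: algebra_simps)
  also have "\<dots> \<le> K^(Suc (Suc n)) + (K+1)^(Suc n) + Suc n * (K+1)^(Suc n)"
    using power_mono[of K "K+1" "Suc n"] by simp
  finally show ?case by (simp add: algebra_simps)
qed

lemma powsum: "(K::nat)^(Suc n) \<le> Suc n * (\<Sum>k\<in>{1..K}. k^n)"
proof (induction K)
  case 0 then show ?case by simp
next
  case (Suc K)
  have "(Suc K)^(Suc n) \<le> K^(Suc n) + Suc n * (K+1)^n" using pd[of K n] by simp
  also have "\<dots> \<le> Suc n * (\<Sum>k\<in>{1..K}. k^n) + Suc n * (Suc K)^n" using Suc.IH by simp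
  also have "\<dots> = Suc n * (\<Sum>k\<in>{1..Suc K}. k^n)"
    by (simp add: algebra_simps)
  finally show ?case .
qed

lemma growth_contra:
  fixes h :: "nat \<Rightarrow> nat \<Rightarrow> nat"
  assumes up: "\<And>N. h r N \<le> (N+1)^u"
    and base: "\<And>N. 1 \<le> h 0 N"
    and mono: "\<And>i N N'. i \<le> r \<Longrightarrow> N \<le> N' \<Longrightarrow> h i N \<le> h i N'"
    and step: "\<And>i. i < r \<Longrightarrow> \<exists>e. \<forall>N. h i (N+e) + h (Suc i) N \<le> h (Suc i) (N+e)"
  shows "r \<le> u"
proof (rule ccontr)
  assume ru: "\<not> r \<le> u"
  obtain es where es: "\<And>i N. i < r \<Longrightarrow> h i (N + es i) + h (Suc i) N \<le> h (Suc i) (N + es i)"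
    using step by metis
  define E where "E = 1 + (\<Sum>i<r. es i)"
  have esE: "es i \<le> E" if "i < r" for i
    unfolding E_def using that by (simp add: member_le_sum le_SucI trans_le_add2)
  have stepE: "h i (N+E) + h (Suc i) N \<le> h (Suc i) (N+E)" if "i < r" for i N
  proof -
    define N' where "N' = N + E - es i"
    have "N' + es i = N + E" using esE[OF that] by (simp add: N'_def)
    moreover have "h (Suc i) N \<le> h (Suc i) N'" using mono[of "Suc i" N N'] that esE[OF that] by (simp add: N'_def)
    ultimately show ?thesis using es[OF that, of N'] by simp
  qed
  define g where "g i K = h i (K * E)" for i K
  have gstep: "g i (Suc K) + g (Suc i) K \<le> g (Suc i) (Suc K)" if "i < r" for i K
    using stepE[OF that, of "K*E"] by (simp add: g_def add.commute)
  have gsum: "(\<Sum>k\<in>{1..K}. g i k) \<le> g (Suc i) K" if "i < r" for i K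
  proof (induction K)
    case 0 then show ?case by simp
  next
    case (Suc K)
    then show ?case using gstep[OF that, of K] by simp
  qed
  have lower: "K^i \<le> fact i * g i K" if "i \<le> r" for i K
    using that
  proof (induction i arbitrary: K)
    case 0 then show ?case using base by (simp add: g_def)
  next
    case (Suc i)
    then have ir: "i < r" by simp
    have "K^(Suc i) \<le> Suc i * (\<Sum>k\<in>{1..K}. k^i)" by (rule powsum)
    also have "\<dots> \<le> Suc i * (\<Sum>k\<in>{1..K}. fact i * g i k)"
      using Suc.IH ir by (intro mult_left_mono sum_mono) auto
    also have "\<dots> = fact (Suc i) * (\<Sum>k\<in>{1..K}. g i k)"
      by (simp add: sum_distrib_left algebra_simps)
    also have "\<dots> \<le> fact (Suc i) * g (Suc i) K"
      using gsum[OF ir] by simp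
    finally show ?case .
  qed
  define K where "K = fact r * (E+1)^u + 1"
  have K1: "K \<ge> 1" by (simp add: K_def)
  have "K^r \<le> fact r * g r K" using lower by simp
  also have "\<dots> \<le> fact r * (K*E+1)^u" using up[of "K*E"] by (simp add: g_def)
  also have "\<dots> \<le> fact r * (K*(E+1))^u"
    using K1 by (intro mult_left_mono power_mono) (auto simp: algebra_simps)
  also have "\<dots> = (fact r * (E+1)^u) * K^u" by (simp only: power_mult_distrib mult_ac)
  also have "\<dots> = (K - 1) * K^u" by (simp add: K_def)
  also have "\<dots> < K * K^u" using K1 by simp
  also have "\<dots> = K^(Suc u)" by simp
  also have "\<dots> \<le> K^r" using ru K1 by (intro power_increasing) auto
  finally show False by simp
qed


interpretation fvs: vector_space "\<lambda>(c::'k::field) (w::'a \<Rightarrow> 'k) x. c * w x"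
  by unfold_locales (auto simp: fun_eq_iff algebra_simps)

interpretation fvp: vector_space_pair "\<lambda>(c::'k::field) (w::'a \<Rightarrow> 'k) x. c * w x"
   "\<lambda>(c::'k::field) (w::'a \<Rightarrow> 'k) x. c * w x"
  by unfold_locales

lemma sum_fun_apply: "(\<Sum>i\<in>I. F i) a = (\<Sum>i\<in>I. F i a)"
  by (induction I rule: infinite_finite_induct) auto

lemma linear_mulf: "Vector_Spaces.linear (\<lambda>(c::'k::field) (w::'a \<Rightarrow> 'k) x. c * w x)
   (\<lambda>(c::'k::field) (w::'a \<Rightarrow> 'k) x. c * w x) (\<lambda>g a. h a * g a)"
  unfolding Vector_Spaces.linear_iff
  by (auto simp: fvs.vector_space_axioms fun_eq_iff algebra_simps)

lemma fvs_card_le_dim: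
  fixes S :: "('a \<Rightarrow> 'k::field) set"
  assumes "finite T" "S \<subseteq> fvs.span T" "B \<subseteq> S" "fvs.independent B"
  shows "card B \<le> fvs.dim S"
proof -
  obtain A where A: "A \<subseteq> S" "fvs.independent A" "S \<subseteq> fvs.span A" "card A = fvs.dim S"
    by (rule fvs.basis_exists)
  have "finite A" using fvs.independent_span_bound[OF assms(1) A(2)] A(1) assms(2) by auto
  then show ?thesis
    using fvs.independent_span_bound[OF _ assms(4)] A assms(3) by fastforce
qed

lemma fvs_dim_mono:
  fixes S :: "('a \<Rightarrow> 'k::field) set"
  assumes "finite T" "S \<subseteq> T"
  shows "fvs.dim S \<le> fvs.dim T"
proof -
  obtain B where B: "B \<subseteq> T" "fvs.independent B" "T \<subseteq> fvs.span B" "card B = fvs.dim T"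
    by (rule fvs.basis_exists)
  have "finite B" using B(1) assms(1) finite_subset by blast
  have "S \<subseteq> fvs.span B" using B(3) assms(2) by blast
  then have "fvs.dim S \<le> card B" using fvs.dim_le_card[OF _ \<open>finite B\<close>] by blast
  with B show ?thesis by simp
qed

lemma GL:
  fixes M R :: "('a \<Rightarrow> 'k::field) \<Rightarrow> ('a \<Rightarrow> 'k)"
  assumes fW: "finite W1" and fT: "finite T"
    and linM: "Vector_Spaces.linear (\<lambda>(c::'k) (w::'a \<Rightarrow> 'k) x. c * w x) (\<lambda>(c::'k) (w::'a \<Rightarrow> 'k) x. c * w x) M"
    and linR: "Vector_Spaces.linear (\<lambda>(c::'k) (w::'a \<Rightarrow> 'k) x. c * w x) (\<lambda>(c::'k) (w::'a \<Rightarrow> 'k) x. c * w x) R"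
    and injM: "inj_on M (fvs.span W1)"
    and MW: "M ` W1 \<subseteq> fvs.span T"
    and RM: "\<And>w. w \<in> fvs.span W1 \<Longrightarrow> R (M w) = 0"
  shows "fvs.dim W1 + fvs.dim (R ` T) \<le> fvs.dim T"
proof -
  obtain B where B: "B \<subseteq> W1" "fvs.independent B" "W1 \<subseteq> fvs.span B" "card B = fvs.dim W1"
    by (rule fvs.basis_exists)
  have fB: "finite B" using B(1) fW finite_subset by blast
  have spB: "fvs.span B \<subseteq> fvs.span W1" using B(1) fvs.span_mono by blast
  have injB: "inj_on M (fvs.span B)" using injM spB inj_on_subset by blast
  have iB': "fvs.independent (M ` B)"
    using fvp.linear_independent_injective_image[OF linM B(2) injB] .
  have cB': "card (M ` B) = card B"
    using card_image[OF inj_on_subset[OF injM]] B(1) fvs.span_base by blast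
  have B'T: "M ` B \<subseteq> fvs.span T" using MW B(1) by blast
  obtain C where C: "M ` B \<subseteq> C" "C \<subseteq> fvs.span T" "fvs.independent C" "fvs.span T \<subseteq> fvs.span C"
    using fvs.maximal_independent_subset_extend[OF B'T iB'] by blast
  have fC: "finite C" using fvs.independent_span_bound[OF fT C(3) C(2)] by blast
  have cC: "card C = fvs.dim T"
    using fvs.basis_card_eq_dim[OF C(2) C(4) C(3)] by simp
  have R0: "R b = 0" if "b \<in> M ` B" for b
    using that RM B(1) fvs.span_base by blast
  have "R ` C \<subseteq> insert 0 (R ` (C - M ` B))" using R0 by blast
  then have "fvs.span (R ` C) \<subseteq> fvs.span (R ` (C - M ` B))"
    by (metis fvs.span_insert_0 fvs.span_mono)
  moreover have "R ` T \<subseteq> fvs.span (R ` C)"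
  proof -
    have "R ` T \<subseteq> R ` fvs.span C" using C(4) fvs.span_base by blast
    also have "\<dots> = fvs.span (R ` C)"
      using fvp.linear_span_image[OF linR] by simp
    finally show ?thesis .
  qed
  ultimately have "R ` T \<subseteq> fvs.span (R ` (C - M ` B))" by blast
  then have "fvs.dim (R ` T) \<le> card (R ` (C - M ` B))"
    using fvs.dim_le_card fC by blast
  also have "\<dots> \<le> card (C - M ` B)" using fC by (simp add: card_image_le)
  also have "\<dots> = card C - card (M ` B)" using C(1) fC by (simp add: card_Diff_subset finite_subset)
  finally have "fvs.dim (R ` T) \<le> card C - card (M ` B)" .
  moreover have "card (M ` B) \<le> card C" using C(1) fC card_mono by blast
  ultimately show ?thesis using B(4) cB' cC by linarith
qed


definition restr :: "'a set \<Rightarrow> ('a \<Rightarrow> 'k::zero) \<Rightarrow> ('a \<Rightarrow> 'k)" where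
  "restr Z g = (\<lambda>a. if a \<in> Z then g a else 0)"

definition MonU :: "'v set \<Rightarrow> nat \<Rightarrow> ('v \<Rightarrow>\<^sub>0 nat) set" where
  "MonU U N = {m. Poly_Mapping.keys m \<subseteq> U \<and> (\<forall>x. Poly_Mapping.lookup m x \<le> N)}"

definition Gen :: "('v \<Rightarrow> 'k::comm_ring_1) set \<Rightarrow> 'v set \<Rightarrow> nat \<Rightarrow> (('v \<Rightarrow> 'k) \<Rightarrow> 'k) set" where
  "Gen Z U N = (\<lambda>m. restr Z (mon m)) ` MonU U N"

definition hf :: "('v \<Rightarrow> 'k::field) set \<Rightarrow> 'v set \<Rightarrow> nat \<Rightarrow> nat" where
  "hf Z U N = fvs.dim (Gen Z U N)"

lemma MonU_finite_card:
  assumes "finite U"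
  shows "finite (MonU U N) \<and> card (MonU U N) \<le> (N+1) ^ card U"
proof -
  let ?f = "\<lambda>m. restrict (Poly_Mapping.lookup m) U"
  have inj: "inj_on ?f (MonU U N)"
  proof (rule inj_onI)
    fix m1 m2 assume m: "m1 \<in> MonU U N" "m2 \<in> MonU U N" "?f m1 = ?f m2"
    show "m1 = m2"
    proof (rule poly_mapping_eqI)
      fix x show "Poly_Mapping.lookup m1 x = Poly_Mapping.lookup m2 x"
      proof (cases "x \<in> U")
        case True then show ?thesis using m(3) by (metis restrict_apply')
      next
        case False then show ?thesis using m(1,2)
          by (auto simp: MonU_def in_keys_iff) (metis in_mono in_keys_iff)+
      qed
    qed
  qed
  have sub: "?f ` MonU U N \<subseteq> PiE U (\<lambda>_. {..N})"
    by (auto simp: MonU_def)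
  have fin: "finite (PiE U (\<lambda>_. {..N}))" using assms by (simp add: finite_PiE)
  have "card (PiE U (\<lambda>_. {..N})) = (N+1) ^ card U"
    using assms by (simp add: card_PiE)
  then show ?thesis
    using inj_on_finite[OF inj sub fin] card_inj_on_le[OF inj sub fin] by simp
qed

lemma Gen_finite: "finite U \<Longrightarrow> finite (Gen Z U N)"
  using MonU_finite_card[of U N] by (simp add: Gen_def)

lemma hf_le: "finite U \<Longrightarrow> hf (Z :: ('v \<Rightarrow> 'k::field) set) U N \<le> (N+1) ^ card U"
proof -
  assume fU: "finite U"
  have "hf Z U N \<le> card (Gen Z U N)"
    unfolding hf_def using Gen_finite[OF fU] by (rule fvs.dim_le_card')
  also have "\<dots> \<le> card (MonU U N)" unfolding Gen_def
    using MonU_finite_card[OF fU] by (simp add: card_image_le)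
  finally show ?thesis using MonU_finite_card[OF fU, of N] by simp
qed

lemma MonU_mono: "N \<le> N' \<Longrightarrow> MonU U N \<subseteq> MonU U N'"
  by (auto simp: MonU_def intro: order_trans)

lemma hf_mono: "finite U \<Longrightarrow> N \<le> N' \<Longrightarrow> hf (Z :: ('v \<Rightarrow> 'k::field) set) U N \<le> hf Z U N'"
  unfolding hf_def
  by (rule fvs_dim_mono[OF Gen_finite]) (auto simp: Gen_def dest: MonU_mono)

lemma hf_ge1:
  assumes "finite U" "Z \<noteq> {}"
  shows "1 \<le> hf (Z :: ('v \<Rightarrow> 'k::field) set) U N"
proof -
  have "0 \<in> MonU U N" by (simp add: MonU_def)
  then have g: "restr Z (mon 0) \<in> Gen Z U N" by (simp add: Gen_def)
  have nz: "restr Z (mon 0) \<noteq> (0 :: ('v \<Rightarrow> 'k) \<Rightarrow> 'k)"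
    using assms(2) by (auto simp: restr_def fun_eq_iff)
  have "card {restr Z (mon 0)} \<le> hf Z U N"
    unfolding hf_def
    by (rule fvs_card_le_dim[OF Gen_finite[OF assms(1)], of _ Z N])
       (use g nz in \<open>auto simp: fvs.span_base\<close>)
  then show ?thesis by simp
qed

lemma span_Gen_repr:
  fixes Z :: "('v \<Rightarrow> 'k::field) set"
  assumes "g \<in> fvs.span (Gen Z U N)"
  shows "\<exists>q. g = restr Z (mp_eval q)"
  using assms
proof (induction rule: fvs.span_induct_alt)
  case base
  show ?case by (rule exI[of _ 0]) (simp add: restr_def fun_eq_iff)
next
  case (step c x y)
  from step(1) obtain m where x: "x = restr Z (mon m)" by (auto simp: Gen_def)
  from step(2) obtain q where y: "y = restr Z (mp_eval q)" by blast
  show ?case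
    by (rule exI[of _ "Poly_Mapping.single m c + q"])
       (simp add: x y restr_def fun_eq_iff eval_add mp_eval_single)
qed

lemma mon_vanish:
  assumes "x \<in> Poly_Mapping.keys m" "a x = 0"
  shows "mon m a = (0::'k::comm_ring_1)"
proof -
  have "a x ^ Poly_Mapping.lookup m x = 0" using assms by (simp add: in_keys_iff power_0_left)
  then show ?thesis unfolding mon_def using assms(1) by (intro prod_zero) auto
qed

lemma hf_step:
  fixes Z Z' :: "('v::finite \<Rightarrow> 'k::field) set"
  assumes irr': "zariski_irreducible UNIV Z'" and cl: "zariski_closed UNIV Z" and sub: "Z \<subset> Z'"
    and L: "\<And>a x. a \<in> Z' \<Longrightarrow> x \<notin> U \<Longrightarrow> a x = 0"
  shows "\<exists>e. \<forall>N. hf Z U (N+e) + hf Z' U N \<le> hf Z' U (N+e)"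
proof -
  have fU: "finite U" by simp
  obtain a0 where a0: "a0 \<in> Z'" "a0 \<notin> Z" using sub by blast
  obtain f where f: "f \<in> vanishing_ideal UNIV Z" "mp_eval f a0 \<noteq> 0"
    using closed_not_in[OF cl, of a0] a0 by (auto simp: aff_space_def)
  have fZ: "mp_eval f a = 0" if "a \<in> Z" for a using f(1) that by (auto simp: vanishing_ideal_def)
  define e where "e = (\<Sum>m\<in>Poly_Mapping.keys f. \<Sum>x\<in>Poly_Mapping.keys m. Poly_Mapping.lookup m x)"
  have ebound: "Poly_Mapping.lookup m x \<le> e" if "m \<in> Poly_Mapping.keys f" for m x
  proof (cases "x \<in> Poly_Mapping.keys m")
    case True
    have "Poly_Mapping.lookup m x \<le> (\<Sum>x\<in>Poly_Mapping.keys m. Poly_Mapping.lookup m x)"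
      using True by (intro member_le_sum) auto
    also have "\<dots> \<le> e" unfolding e_def
      using that by (intro member_le_sum[of m "Poly_Mapping.keys f" "\<lambda>m. \<Sum>x\<in>Poly_Mapping.keys m. Poly_Mapping.lookup m x"]) auto
    finally show ?thesis .
  next
    case False then show ?thesis by (simp add: in_keys_iff)
  qed
  show ?thesis
  proof (intro exI allI)
    fix N
    define M :: "(('v \<Rightarrow> 'k) \<Rightarrow> 'k) \<Rightarrow> (('v \<Rightarrow> 'k) \<Rightarrow> 'k)" where "M = (\<lambda>g a. mp_eval f a * g a)"
    define R :: "(('v \<Rightarrow> 'k) \<Rightarrow> 'k) \<Rightarrow> (('v \<Rightarrow> 'k) \<Rightarrow> 'k)" where "R = (\<lambda>g a. (if a \<in> Z then 1 else 0) * g a)"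
    have linM: "Vector_Spaces.linear (\<lambda>(c::'k) (w::('v \<Rightarrow> 'k) \<Rightarrow> 'k) x. c * w x) (\<lambda>(c::'k) (w::('v \<Rightarrow> 'k) \<Rightarrow> 'k) x. c * w x) M"
      unfolding M_def by (rule linear_mulf)
    have linR: "Vector_Spaces.linear (\<lambda>(c::'k) (w::('v \<Rightarrow> 'k) \<Rightarrow> 'k) x. c * w x) (\<lambda>(c::'k) (w::('v \<Rightarrow> 'k) \<Rightarrow> 'k) x. c * w x) R"
      unfolding R_def by (rule linear_mulf)
    have MW: "M ` Gen Z' U N \<subseteq> fvs.span (Gen Z' U (N+e))"
    proof
      fix g assume "g \<in> M ` Gen Z' U N"
      then obtain m where m: "m \<in> MonU U N" and g: "g = M (restr Z' (mon m))"
        by (auto simp: Gen_def)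
      have geq: "g = (\<Sum>m'\<in>Poly_Mapping.keys f. (\<lambda>w x. Poly_Mapping.lookup f m' * w x) (restr Z' (mon (m' + m))))"
        by (auto simp: g M_def restr_def fun_eq_iff sum_fun_apply mp_eval_mon sum_distrib_left mon_add mult_ac)
      have "restr Z' (mon (m' + m)) \<in> fvs.span (Gen Z' U (N+e))" if m': "m' \<in> Poly_Mapping.keys f" for m'
      proof (cases "Poly_Mapping.keys m' \<subseteq> U")
        case True
        have "m' + m \<in> MonU U (N+e)"
          using True m ebound[OF m'] keys_add[of m' m]
          by (auto simp: MonU_def lookup_add) (metis add_le_mono add.commute)
        then show ?thesis by (intro fvs.span_base) (auto simp: Gen_def)
      next
        case False
        then obtain x where x: "x \<in> Poly_Mapping.keys m'" "x \<notin> U" by blast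
        have "x \<in> Poly_Mapping.keys (m' + m)" using x(1) by (simp add: in_keys_iff lookup_add)
        then have "restr Z' (mon (m' + m)) = 0"
          using L x(2) mon_vanish by (fastforce simp: restr_def fun_eq_iff)
        then show ?thesis by (simp add: fvs.span_zero)
      qed
      then show "g \<in> fvs.span (Gen Z' U (N+e))"
        unfolding geq by (intro fvs.span_sum fvs.span_scale) auto
    qed
    have injM: "inj_on M (fvs.span (Gen Z' U N))"
    proof -
      have "w = 0" if w: "w \<in> fvs.span (Gen Z' U N)" "M w = 0" for w
      proof -
        obtain q where q: "w = restr Z' (mp_eval q)" using span_Gen_repr[OF w(1)] by blast
        have "mp_eval f a * mp_eval q a = 0" if "a \<in> Z'" for a
          using w(2) that by (auto simp: M_def q restr_def fun_eq_iff dest!: fun_cong[of _ _ a])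
        then have "(\<forall>a\<in>Z'. mp_eval f a = 0) \<or> (\<forall>a\<in>Z'. mp_eval q a = 0)"
          by (intro irreducible_prime[OF irr']) (auto simp: polys_def)
        with a0 f have "\<forall>a\<in>Z'. mp_eval q a = 0" by blast
        then show "w = 0" by (auto simp: q restr_def fun_eq_iff)
      qed
      then show ?thesis
        using fvp.linear_inj_on_iff_eq_0[OF linM fvs.subspace_span] by blast
    qed
    have RM: "R (M w) = 0" for w
      by (auto simp: R_def M_def fun_eq_iff fZ)
    have RT: "R ` Gen Z' U (N+e) = Gen Z U (N+e)"
    proof -
      have "R (restr Z' g) = restr Z g" for g using sub by (auto simp: R_def restr_def fun_eq_iff)
      then show ?thesis by (simp add: Gen_def image_image)
    qed
    show "hf Z U (N+e) + hf Z' U N \<le> hf Z' U (N+e)"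
    proof -
      have "fvs.dim (Gen Z' U N) + fvs.dim (R ` Gen Z' U (N+e)) \<le> fvs.dim (Gen Z' U (N+e))"
        by (rule GL[where ?W1.0 = "Gen Z' U N" and T = "Gen Z' U (N+e)" and M = M and R = R])
           (simp_all only: Gen_finite[OF fU] linM linR injM MW RM)
      then show ?thesis unfolding RT hf_def by simp
    qed
  qed
qed

lemma krull_bound:
  fixes Z :: "nat \<Rightarrow> ('v::finite \<Rightarrow> 'k::field) set"
  assumes irr: "\<And>i. i \<le> r \<Longrightarrow> zariski_irreducible UNIV (Z i)"
    and ch: "\<And>i. i < r \<Longrightarrow> Z i \<subset> Z (Suc i)"
    and L: "\<And>a x. a \<in> Z r \<Longrightarrow> x \<notin> U \<Longrightarrow> a x = 0"
  shows "r \<le> card U"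
proof -
  have fU: "finite U" by simp
  have sub: "Z i \<subseteq> Z r" if "i \<le> r" for i
    using that
  proof (induction "r - i" arbitrary: i)
    case 0 then show ?case by simp
  next
    case (Suc d)
    then have "Z (Suc i) \<subseteq> Z r" by simp
    moreover have "i < r" using Suc.hyps(2) by simp
    then have "Z i \<subseteq> Z (Suc i)" using ch[of i] by auto
    ultimately show ?case by blast
  qed
  show ?thesis
  proof (rule growth_contra[where h = "\<lambda>i N. hf (Z i) U N"])
    show "hf (Z r) U N \<le> (N + 1) ^ card U" for N by (rule hf_le[OF fU])
    show "1 \<le> hf (Z 0) U N" for N
    proof -
      have "Z 0 \<noteq> {}" using irr[of 0] unfolding zariski_irreducible_def by blast
      then show ?thesis using hf_ge1[OF fU] by simp
    qed
    show "hf (Z i) U N \<le> hf (Z i) U N'" if "i \<le> r" "N \<le> N'" for i N N'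
      using hf_mono[OF fU that(2)] .
    show "\<exists>e. \<forall>N. hf (Z i) U (N + e) + hf (Z (Suc i)) U N \<le> hf (Z (Suc i)) U (N + e)"
      if "i < r" for i
    proof (rule hf_step)
      show "zariski_irreducible UNIV (Z (Suc i))" using irr that by simp
      show "zariski_closed UNIV (Z i)" using irr[of i] that by (simp add: zariski_irreducible_def)
      show "Z i \<subset> Z (Suc i)" using ch that by simp
      show "a x = 0" if "a \<in> Z (Suc i)" "x \<notin> U" for a x
        using L sub[of "Suc i"] \<open>i < r\<close> that by auto
    qed
  qed
qed


lemma digits_bound:
  assumes "\<And>k. k < n \<Longrightarrow> d k < (B::nat)"
  shows "(\<Sum>k<n. B^k * d k) < B^n"
  using assms
proof (induction n)
  case 0 then show ?case by simp
next
  case (Suc n)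
  have IH: "(\<Sum>k<n. B^k * d k) < B^n" using Suc by simp
  have "d n < B" using Suc.prems by simp
  then have h1: "B^n * d n \<le> B^n * (B - 1)" by (intro mult_left_mono) auto
  have "(\<Sum>k<Suc n. B^k * d k) = (\<Sum>k<n. B^k * d k) + B^n * d n" by simp
  then have "(\<Sum>k<Suc n. B^k * d k) < B^n + B^n * (B - 1)" using IH h1 by linarith
  also have "\<dots> = B^(Suc n)" using \<open>d n < B\<close>
    by (cases B) (auto simp: algebra_simps)
  finally show ?case .
qed

lemma digits_unique:
  assumes "\<And>k. k < n \<Longrightarrow> d k < (B::nat)" "\<And>k. k < n \<Longrightarrow> d' k < B"
    and "(\<Sum>k<n. B^k * d k) = (\<Sum>k<n. B^k * d' k)"
  shows "\<forall>k<n. d k = d' k"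
  using assms
proof (induction n)
  case 0 then show ?case by simp
next
  case (Suc n)
  have b1: "(\<Sum>k<n. B^k * d k) < B^n" using Suc.prems by (intro digits_bound) auto
  have b2: "(\<Sum>k<n. B^k * d' k) < B^n" using Suc.prems by (intro digits_bound) auto
  have eq: "(\<Sum>k<n. B^k * d k) + B^n * d n = (\<Sum>k<n. B^k * d' k) + B^n * d' n"
    using Suc.prems(3) by simp
  have "B > 0" using Suc.prems(1)[of n] by simp
  then have Bn: "B^n > 0" by simp
  have "((\<Sum>k<n. B^k * d k) + B^n * d n) div B^n = d n"
    using b1 Bn by (simp add: div_add1_eq[symmetric] add.commute)
  moreover have "((\<Sum>k<n. B^k * d' k) + B^n * d' n) div B^n = d' n"
    using b2 Bn by (simp add: add.commute)
  ultimately have dn: "d n = d' n" using eq by simp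
  then have h3: "(\<Sum>k<n. B^k * d k) = (\<Sum>k<n. B^k * d' k)" using eq by simp
  have p1: "\<And>k. k < n \<Longrightarrow> d k < B" using Suc.prems(1) by simp
  have p2: "\<And>k. k < n \<Longrightarrow> d' k < B" using Suc.prems(2) by simp
  from p1 p2 h3 have "\<forall>k<n. d k = d' k" by (rule Suc.IH)
  with dn show ?case by (auto simp: less_Suc_eq)
qed

lemma lemmaZ:
  fixes f :: "('x, 'k::idom) mpoly"
  assumes inf: "infinite (UNIV::'k set)" and fU: "finite U"
    and van: "\<And>a. (\<And>z. z \<notin> U \<Longrightarrow> a z = 0) \<Longrightarrow> (\<And>u. u \<in> U \<Longrightarrow> a u \<noteq> 0) \<Longrightarrow> mp_eval f a = 0"
    and m0: "m0 \<in> Poly_Mapping.keys f" "Poly_Mapping.keys m0 \<subseteq> U"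
  shows False
proof -
  define B where "B = 1 + (\<Sum>m\<in>Poly_Mapping.keys f. \<Sum>x\<in>Poly_Mapping.keys m. Poly_Mapping.lookup m x)"
  have Bb: "Poly_Mapping.lookup m x < B" if "m \<in> Poly_Mapping.keys f" for m x
  proof (cases "x \<in> Poly_Mapping.keys m")
    case True
    have "Poly_Mapping.lookup m x \<le> (\<Sum>x\<in>Poly_Mapping.keys m. Poly_Mapping.lookup m x)"
      using True by (intro member_le_sum) auto
    also have "\<dots> \<le> (\<Sum>m\<in>Poly_Mapping.keys f. \<Sum>x\<in>Poly_Mapping.keys m. Poly_Mapping.lookup m x)"
      using that by (intro member_le_sum[of m "Poly_Mapping.keys f" "\<lambda>m. \<Sum>x\<in>Poly_Mapping.keys m. Poly_Mapping.lookup m x"]) auto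
    finally show ?thesis unfolding B_def by simp
  next
    case False then show ?thesis by (simp add: in_keys_iff B_def)
  qed
  obtain idx where idx: "bij_betw idx U {0..<card U}" using ex_bij_betw_finite_nat[OF fU] by blast
  define n where "n = card U"
  define psi where "psi m = (\<Sum>x\<in>U. B ^ idx x * Poly_Mapping.lookup m x)" for m :: "'x \<Rightarrow>\<^sub>0 nat"
  define K where "K = {m \<in> Poly_Mapping.keys f. Poly_Mapping.keys m \<subseteq> U}"
  have finK: "finite K" by (simp add: K_def)
  have psi_inj: "m1 = m2" if "m1 \<in> K" "m2 \<in> K" "psi m1 = psi m2" for m1 m2
  proof -
    let ?iv = "the_inv_into U idx"
    have re: "psi m = (\<Sum>k<n. B^k * Poly_Mapping.lookup m (?iv k))" for m
    proof -
      have "(\<Sum>k<n. B^k * Poly_Mapping.lookup m (?iv k)) = (\<Sum>x\<in>U. B^(idx x) * Poly_Mapping.lookup m (?iv (idx x)))"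
        using sum.reindex_bij_betw[OF idx, of "\<lambda>k. B^k * Poly_Mapping.lookup m (?iv k)"]
        by (simp add: n_def atLeast0LessThan)
      also have "\<dots> = psi m" unfolding psi_def
        using the_inv_into_f_f[OF bij_betw_imp_inj_on[OF idx]] by simp
      finally show ?thesis by simp
    qed
    have ivU: "?iv k \<in> U" if "k < n" for k
      using that idx by (simp add: n_def bij_betw_def the_inv_into_into)
    have "\<forall>k<n. Poly_Mapping.lookup m1 (?iv k) = Poly_Mapping.lookup m2 (?iv k)"
      using that by (intro digits_unique[of n _ B]) (auto simp: re K_def Bb)
    then have eqU: "Poly_Mapping.lookup m1 x = Poly_Mapping.lookup m2 x" if "x \<in> U" for x
      using that idx the_inv_into_f_f[OF bij_betw_imp_inj_on[OF idx]]
      by (metis atLeastLessThan_iff bij_betwE n_def)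
    show ?thesis
    proof (rule poly_mapping_eqI)
      fix x show "Poly_Mapping.lookup m1 x = Poly_Mapping.lookup m2 x"
      proof (cases "x \<in> U")
        case True then show ?thesis using eqU by blast
      next
        case False
        then have "x \<notin> Poly_Mapping.keys m1" "x \<notin> Poly_Mapping.keys m2"
          using \<open>m1 \<in> K\<close> \<open>m2 \<in> K\<close> by (auto simp: K_def)
        then show ?thesis by (simp add: in_keys_iff)
      qed
    qed
  qed
  define G where "G = (\<Sum>m\<in>K. monom (Poly_Mapping.lookup f m) (psi m))"
  have Gt: "poly G t = 0" if "t \<noteq> 0" for t
  proof -
    define a where "a z = (if z \<in> U then t ^ (B ^ idx z) else 0)" for z
    have "mp_eval f a = 0" by (rule van) (use that in \<open>auto simp: a_def\<close>)
    moreover have "mp_eval f a = (\<Sum>m\<in>K. Poly_Mapping.lookup f m * t ^ psi m)"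
    proof -
      have "mp_eval f a = (\<Sum>m\<in>Poly_Mapping.keys f. Poly_Mapping.lookup f m * mon m a)"
        by (rule mp_eval_mon)
      also have "\<dots> = (\<Sum>m\<in>K. Poly_Mapping.lookup f m * mon m a)"
      proof (rule sum.mono_neutral_right)
        show "\<forall>m\<in>Poly_Mapping.keys f - K. Poly_Mapping.lookup f m * mon m a = 0"
        proof
          fix m assume "m \<in> Poly_Mapping.keys f - K"
          then obtain x where "x \<in> Poly_Mapping.keys m" "x \<notin> U" by (auto simp: K_def)
          then show "Poly_Mapping.lookup f m * mon m a = 0"
            using mon_vanish[of x m a] by (simp add: a_def)
        qed
      qed (auto simp: K_def)
      also have "\<dots> = (\<Sum>m\<in>K. Poly_Mapping.lookup f m * t ^ psi m)"
      proof (rule sum.cong[OF refl])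
        fix m assume "m \<in> K"
        then have "mon m a = (\<Prod>x\<in>U. a x ^ Poly_Mapping.lookup m x)"
          using fU by (intro mon_superset) (auto simp: K_def)
        also have "\<dots> = (\<Prod>x\<in>U. t ^ (B ^ idx x * Poly_Mapping.lookup m x))"
          by (intro prod.cong) (auto simp: a_def power_mult)
        also have "\<dots> = t ^ psi m" by (simp add: psi_def power_sum)
        finally show "Poly_Mapping.lookup f m * mon m a = Poly_Mapping.lookup f m * t ^ psi m" by simp
      qed
      finally show ?thesis .
    qed
    moreover have "poly G t = (\<Sum>m\<in>K. Poly_Mapping.lookup f m * t ^ psi m)"
      by (simp add: G_def poly_sum poly_monom)
    ultimately show ?thesis by simp
  qed
  have G0: "G = 0"
  proof (rule ccontr)
    assume "G \<noteq> 0"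
    then have "finite {t. poly G t = 0}" by (rule poly_roots_finite)
    moreover have "UNIV - {0} \<subseteq> {t. poly G t = 0}" using Gt by auto
    ultimately have "finite (UNIV - {0::'k})" by (rule finite_subset[rotated])
    with inf show False by simp
  qed
  have cG: "coeff G (psi m0) = Poly_Mapping.lookup f m0"
  proof -
    have m0K: "m0 \<in> K" using m0 by (simp add: K_def)
    have "coeff G (psi m0) = (\<Sum>m\<in>K. if psi m = psi m0 then Poly_Mapping.lookup f m else 0)"
      by (simp add: G_def coeff_sum coeff_monom eq_commute)
    also have "\<dots> = (\<Sum>m\<in>K. if m = m0 then Poly_Mapping.lookup f m else 0)"
      using psi_inj m0K by (intro sum.cong) auto
    also have "\<dots> = Poly_Mapping.lookup f m0" using m0K finK by simp
    finally show ?thesis .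
  qed
  have "Poly_Mapping.lookup f m0 = 0" using cG unfolding G0 by simp
  then show False using m0(1) by (simp add: in_keys_iff)
qed


definition Xg :: "('v \<Rightarrow> 'v \<Rightarrow> bool) \<Rightarrow> ('v \<Rightarrow> 'k::comm_ring_1) set" where
  "Xg E = zero_set UNIV (edge_gens E :: ('v, 'k) mpoly set)"

definition supp :: "('v \<Rightarrow> 'k::zero) \<Rightarrow> 'v set" where "supp p = {x. p x \<noteq> 0}"
definition nbr :: "('v \<Rightarrow> 'v \<Rightarrow> bool) \<Rightarrow> 'v set \<Rightarrow> 'v set" where "nbr E S = {y. \<exists>x\<in>S. E x y}"
definition ev :: "'v \<Rightarrow> 'v \<Rightarrow> 'k::{zero,one}" where "ev x = (\<lambda>z. if z = x then 1 else 0)"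

lemma aff_UNIV[simp]: "aff_space UNIV = UNIV" by (simp add: aff_space_def)
lemma polys_UNIV[simp]: "polys UNIV = UNIV" by (simp add: polys_def)

lemma Xg_iff:
  fixes E :: "'v \<Rightarrow> 'v \<Rightarrow> bool" and a :: "'v \<Rightarrow> 'k::comm_ring_1"
  assumes irrefl: "\<And>x. \<not> E x x"
  shows "a \<in> Xg E \<longleftrightarrow> (\<forall>x y. E x y \<longrightarrow> a x * a y = (0::'k::comm_ring_1))"
proof -
  have ne: "E x y \<Longrightarrow> x \<noteq> y" for x y using irrefl by blast
  have "a \<in> Xg E \<longleftrightarrow> (\<forall>x y. E x y \<longrightarrow> mp_eval (mp_xy x y :: ('v, 'k) mpoly) a = 0)"
    by (auto simp: Xg_def zero_set_def edge_gens_def)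
  also have "\<dots> \<longleftrightarrow> (\<forall>x y. E x y \<longrightarrow> a x * a y = 0)"
    using ne by (auto simp: eval_mp_xy)
  finally show ?thesis .
qed

definition var :: "'x \<Rightarrow> ('x, 'k::comm_ring_1) mpoly" where
  "var x = Poly_Mapping.single (Poly_Mapping.single x (1::nat)) 1"

lemma var_eval[simp]: "mp_eval (var x :: ('x, 'k::comm_ring_1) mpoly) a = a x"
  by (simp add: var_def mp_eval_single mon_def)

lemma diff_xy:
  assumes "x \<noteq> y"
  shows "mp_differential (mp_xy x y :: ('v, 'k::comm_ring_1) mpoly) p w = p x * w y + w x * p y"
  by (simp add: mp_differential_def eval_with_mp_xy[OF assms] algebra_simps)

lemma xy_in_ideal:
  assumes irrefl: "\<And>x. \<not> E x x" and "E x y"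
  shows "(mp_xy x y :: ('v, 'k::comm_ring_1) mpoly) \<in> vanishing_ideal UNIV (Xg E)"
proof -
  have "x \<noteq> y" using assms by blast
  then show ?thesis using assms(2) by (auto simp: vanishing_ideal_def Xg_iff[OF irrefl] eval_mp_xy)
qed

lemma tangent_zero:
  fixes p :: "'v \<Rightarrow> 'k::field"
  assumes irrefl: "\<And>x. \<not> E x x" and p: "p \<in> Xg E" and px: "p x \<noteq> 0" and E: "E x y"
    and w: "w \<in> tangent_space UNIV (Xg E) p"
  shows "w y = 0"
proof -
  have xy: "x \<noteq> y" using irrefl E by blast
  have "p x * p y = 0" using p E by (simp add: Xg_iff[OF irrefl])
  then have py: "p y = 0" using px by simp
  have "mp_differential (mp_xy x y :: ('v, 'k) mpoly) p w = 0"
    using w xy_in_ideal[of E, OF irrefl E] by (auto simp: tangent_space_def)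
  then show ?thesis using diff_xy[OF xy, of p w] py px by simp
qed

lemma tangent_ev:
  fixes p :: "'v \<Rightarrow> 'k::field"
  assumes inf: "infinite (UNIV :: 'k set)"
    and sym: "\<And>x y. E x y \<Longrightarrow> E y x" and irrefl: "\<And>x. \<not> E x x"
    and p: "p \<in> Xg E" and x: "x \<notin> nbr E (supp p)"
  shows "ev x \<in> tangent_space UNIV (Xg E) p"
proof -
  have line: "(\<lambda>z. p z + t * ev x z) \<in> Xg E" for t
  proof -
    have "(p u + t * ev x u) * (p v + t * ev x v) = 0" if "E u v" for u v
    proof -
      have uv: "u \<noteq> v" using irrefl that by blast
      have puv: "p u * p v = 0" using p that by (simp add: Xg_iff[OF irrefl])
      show ?thesis
      proof (cases "u = x \<or> v = x")
        case False then show ?thesis using puv by (simp add: ev_def)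
      next
        case True
        then show ?thesis
        proof
          assume ux: "u = x"
          have "p v = 0" using x that ux sym by (auto simp: nbr_def supp_def)
          then show ?thesis using ux uv by (simp add: ev_def)
        next
          assume vx: "v = x"
          have "p u = 0" using x that vx by (auto simp: nbr_def supp_def)
          then show ?thesis using vx uv by (simp add: ev_def)
        qed
      qed
    qed
    then show ?thesis by (simp add: Xg_iff[OF irrefl])
  qed
  show ?thesis
    unfolding tangent_space_def
  proof (intro CollectI conjI ballI)
    show "ev x \<in> aff_space UNIV" by simp
    fix f :: "('v, 'k) mpoly" assume f: "f \<in> vanishing_ideal UNIV (Xg E)"
    define P where "P = mp_eval_with (\<lambda>c. [:c:]) f (\<lambda>z. [:p z, ev x z:])"
    have "poly P t = 0" for t
      unfolding P_def eval_line using f line[of t] by (auto simp: vanishing_ideal_def)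
    then have "P = 0" by (rule poly_eq_0_if_all_roots[OF inf])
    then show "mp_differential f p (ev x) = 0" by (simp add: mp_differential_def P_def)
  qed
qed

lemma ev_apply: "ev x y = (if y = x then 1 else 0)" by (simp add: ev_def)

lemma inj_ev: "inj (ev :: 'v \<Rightarrow> 'v \<Rightarrow> 'k::zero_neq_one)"
proof (rule injI)
  fix x y :: 'v assume "(ev x :: 'v \<Rightarrow> 'k) = ev y"
  then have "(ev x :: 'v \<Rightarrow> 'k) x = ev y x" by simp
  then show "x = y" by (simp add: ev_def split: if_splits)
qed

lemma ev_indep: "fvs.independent (ev ` A :: ('v::finite \<Rightarrow> 'k::field) set)"
proof (rule fvs.independent_if_scalars_zero)
  let ?B = "ev ` A :: ('v \<Rightarrow> 'k) set"
  show "finite ?B" by simp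
  fix f :: "('v \<Rightarrow> 'k) \<Rightarrow> 'k" and v :: "'v \<Rightarrow> 'k"
  assume s0: "(\<Sum>x\<in>?B. (\<lambda>z. f x * x z)) = 0" and v: "v \<in> ev ` A"
  then obtain y where y: "v = ev y" "y \<in> A" by blast
  have "0 = (\<Sum>x\<in>?B. (\<lambda>z. f x * x z)) y" using s0 by simp
  also have "\<dots> = (\<Sum>x\<in>?B. f x * x y)" by (simp add: sum_fun_apply)
  also have "\<dots> = (\<Sum>x\<in>?B. if x = v then f x else 0)"
  proof (rule sum.cong[OF refl])
    fix x assume "x \<in> ?B"
    then obtain y' where xy': "x = ev y'" by blast
    have "x = v \<longleftrightarrow> y' = y"
    proof
      assume "x = v" then have "(ev y' :: 'v \<Rightarrow> 'k) = ev y" using xy' y(1) by simp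
      then have "(ev y' :: 'v \<Rightarrow> 'k) y' = ev y y'" by simp
      then show "y' = y" by (simp add: ev_def split: if_splits)
    next
      assume "y' = y" then show "x = v" using xy' y(1) by simp
    qed
    then show "f x * x y = (if x = v then f x else 0)"
      using xy' by (auto simp: ev_def)
  qed
  also have "\<dots> = f v" using v by simp
  finally show "f v = 0" by simp
qed

lemma span_ev: "{w :: 'v::finite \<Rightarrow> 'k::field. \<forall>y\<in>C. w y = 0} \<subseteq> fvs.span (ev ` (UNIV - C))"
proof
  fix w :: "'v \<Rightarrow> 'k" assume w: "w \<in> {w. \<forall>y\<in>C. w y = 0}"
  have weq: "w = (\<Sum>x\<in>UNIV - C. (\<lambda>z. w x * ev x z))"
  proof
    fix z
    show "w z = (\<Sum>x\<in>UNIV - C. (\<lambda>z. w x * ev x z)) z"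
    proof (cases "z \<in> C")
      case True
      then have "(\<Sum>x\<in>UNIV - C. w x * ev x z) = 0" by (intro sum.neutral) (auto simp: ev_def)
      then show ?thesis using True w by (simp add: sum_fun_apply)
    next
      case False
      have "(\<Sum>x\<in>UNIV - C. w x * ev x z) = (\<Sum>x\<in>UNIV - C. if x = z then w x else 0)"
        by (intro sum.cong) (auto simp: ev_def)
      also have "\<dots> = w z" using False by simp
      finally show ?thesis by (simp add: sum_fun_apply)
    qed
  qed
  show "w \<in> fvs.span (ev ` (UNIV - C))"
    by (subst weq, intro fvs.span_sum fvs.span_scale fvs.span_base) auto
qed

lemma dim_ge:
  fixes T :: "('v::finite \<Rightarrow> 'k::field) set"
  assumes "ev ` A \<subseteq> T"
  shows "card A \<le> fvs.dim T"
proof -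
  have "card (ev ` A :: ('v \<Rightarrow> 'k) set) \<le> fvs.dim T"
    by (rule fvs_card_le_dim[of "ev ` UNIV"]) (use assms span_ev[of "{}"] ev_indep in auto)
  moreover have "card (ev ` A :: ('v \<Rightarrow> 'k) set) = card A"
    by (rule card_image) (rule inj_on_subset[OF inj_ev], simp)
  ultimately show ?thesis by simp
qed

lemma dim_le:
  fixes T :: "('v::finite \<Rightarrow> 'k::field) set"
  assumes "T \<subseteq> {w. \<forall>y\<in>C. w y = 0}"
  shows "fvs.dim T \<le> card (UNIV - C)"
proof -
  have "fvs.dim T \<le> card (ev ` (UNIV - C) :: ('v \<Rightarrow> 'k) set)"
    by (rule fvs.dim_le_card) (use assms span_ev[of C] in auto)
  also have "\<dots> \<le> card (UNIV - C)" by (rule card_image_le) simp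
  finally show ?thesis .
qed

lemma chain_sub:
  assumes ch: "\<And>i. i < r \<Longrightarrow> Z i \<subset> Z (Suc i)" and "i \<le> r"
  shows "Z i \<subseteq> Z r"
  using assms(2)
proof (induction "r - i" arbitrary: i)
  case 0 then show ?case by simp
next
  case (Suc d)
  then have "Z (Suc i) \<subseteq> Z r" by simp
  moreover have "i < r" using Suc.hyps(2) by simp
  then have "Z i \<subseteq> Z (Suc i)" using ch[of i] by auto
  ultimately show ?case by blast
qed

definition LDset :: "('v \<Rightarrow> 'k::comm_ring_1) set \<Rightarrow> ('v \<Rightarrow> 'k) \<Rightarrow> nat set" where
  "LDset X p = {r. \<exists>Z :: nat \<Rightarrow> ('v \<Rightarrow> 'k) set.
      p \<in> Z 0 \<and> (\<forall>i\<le>r. zariski_irreducible UNIV (Z i) \<and> Z i \<subseteq> X) \<and>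
      (\<forall>i<r. Z i \<subset> Z (Suc i))}"

lemma local_dim_LD: "local_dim UNIV X p = Sup (LDset X p)"
  by (simp add: local_dim_def LDset_def)

lemma ld_upper:
  fixes p :: "'v::finite \<Rightarrow> 'k::field" and E :: "'v \<Rightarrow> 'v \<Rightarrow> bool"
  assumes irrefl: "\<And>x. \<not> E x x"
    and r: "r \<in> LDset (Xg E) p"
  shows "\<exists>C. (\<forall>x y. E x y \<longrightarrow> x \<in> C \<or> y \<in> C) \<and> (\<forall>x\<in>C. p x = 0) \<and> r \<le> card (UNIV - C)"
proof -
  obtain Z :: "nat \<Rightarrow> ('v \<Rightarrow> 'k) set" where Z: "p \<in> Z 0"
    "\<And>i. i \<le> r \<Longrightarrow> zariski_irreducible UNIV (Z i)" "\<And>i. i \<le> r \<Longrightarrow> Z i \<subseteq> Xg E"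
    "\<And>i. i < r \<Longrightarrow> Z i \<subset> Z (Suc i)"
    using r by (auto simp: LDset_def)
  define C where "C = {x. \<forall>a\<in>Z r. a x = 0}"
  have pZ: "p \<in> Z r" using chain_sub[of r Z 0] Z(1,4) by auto
  have cover: "x \<in> C \<or> y \<in> C" if "E x y" for x y
  proof -
    have "mp_eval ((var x :: ('v,'k) mpoly)) a *
          mp_eval ((var y :: ('v,'k) mpoly)) a = 0" if "a \<in> Z r" for a
    proof -
      have "a \<in> Xg E" using Z(3)[of r] that by blast
      then show ?thesis using \<open>E x y\<close> by (simp add: Xg_iff[OF irrefl])
    qed
    then have "(\<forall>a\<in>Z r. mp_eval ((var x :: ('v,'k) mpoly)) a = 0) \<or>
          (\<forall>a\<in>Z r. mp_eval ((var y :: ('v,'k) mpoly)) a = 0)"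
      by (intro irreducible_prime[OF Z(2)[of r]]) auto
    then show ?thesis by (simp add: var_eval C_def)
  qed
  have "r \<le> card (UNIV - C)"
    by (rule krull_bound[of r Z]) (use Z in \<open>auto simp: C_def\<close>)
  moreover have "\<forall>x\<in>C. p x = 0" using pZ by (auto simp: C_def)
  ultimately show ?thesis using cover by blast
qed

lemma local_dim_le:
  assumes "\<And>r. r \<in> LDset X p \<Longrightarrow> r \<le> b"
  shows "local_dim UNIV X p \<le> b"
proof (cases "LDset X p = {}")
  case True then show ?thesis by (simp add: local_dim_LD)
next
  case False then show ?thesis unfolding local_dim_LD using assms by (intro cSup_least) auto
qed

lemma ld_lower:
  fixes p :: "'v::finite \<Rightarrow> 'k::field" and E :: "'v \<Rightarrow> 'v \<Rightarrow> bool"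
  assumes inf: "infinite (UNIV :: 'k set)" and irrefl: "\<And>x. \<not> E x x"
    and p: "p \<in> Xg E"
  shows "card (supp p) \<in> LDset (Xg E) p"
proof -
  obtain xs where xs: "distinct xs" "set xs = supp p"
    using finite_distinct_list[of "supp p"] by auto
  have len: "length xs = card (supp p)" using xs distinct_card by fastforce
  define Z where "Z i = {a :: 'v \<Rightarrow> 'k. \<forall>x. x \<notin> set (take i xs) \<longrightarrow> a x = p x}" for i
  have p0: "p \<in> Z 0" by (simp add: Z_def)
  have subX: "Z i \<subseteq> Xg E" for i
  proof
    fix a assume a: "a \<in> Z i"
    have sa: "a x \<noteq> 0 \<Longrightarrow> p x \<noteq> 0" for x
    proof -
      assume ax: "a x \<noteq> 0"
      show "p x \<noteq> 0"
      proof (cases "x \<in> set (take i xs)")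
        case True then have "x \<in> set xs" using set_take_subset by fastforce
        then show ?thesis using xs by (simp add: supp_def)
      next
        case False then show ?thesis using a ax by (simp add: Z_def)
      qed
    qed
    have "a x * a y = 0" if "E x y" for x y
    proof (rule ccontr)
      assume "a x * a y \<noteq> 0"
      then have "p x * p y \<noteq> 0" using sa by simp
      with p that show False by (simp add: Xg_iff[OF irrefl])
    qed
    then show "a \<in> Xg E" by (simp add: Xg_iff[OF irrefl])
  qed
  have irr: "zariski_irreducible UNIV (Z i)" for i
  proof (rule line_irreducible[OF inf])
    define F where "F = {(var x :: ('v,'k) mpoly) + Poly_Mapping.single 0 (- p x) | x. x \<notin> set (take i xs)}"
    have "Z i = zero_set UNIV F"
      by (auto simp: Z_def F_def zero_set_def eval_add var_eval mp_eval_single)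
    then show "zariski_closed UNIV (Z i)" by (simp add: zero_set_closed)
    show "Z i \<noteq> {}" using p0 by (auto simp: Z_def)
    show "(\<lambda>x. a x + t * (b x - a x)) \<in> Z i" if "a \<in> Z i" "b \<in> Z i" for a b t
      using that by (simp add: Z_def)
  qed
  have strict: "Z i \<subset> Z (Suc i)" if "i < length xs" for i
  proof
    have tk: "set (take (Suc i) xs) = insert (xs ! i) (set (take i xs))"
      using that by (simp add: take_Suc_conv_app_nth)
    show "Z i \<subseteq> Z (Suc i)" using tk by (auto simp: Z_def)
    have nin: "xs ! i \<notin> set (take i xs)"
    proof -
      have "distinct (take (Suc i) xs)" using xs(1) by simp
      then show ?thesis using that by (simp add: take_Suc_conv_app_nth)
    qed
    define q where "q = p(xs ! i := p (xs ! i) + 1)"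
    have "q \<in> Z (Suc i)" using tk by (auto simp: Z_def q_def)
    moreover have "q \<notin> Z i" using nin by (auto simp: Z_def q_def)
    ultimately show "Z i \<noteq> Z (Suc i)" by blast
  qed
  show ?thesis
    unfolding LDset_def
    by (rule CollectI, rule exI[of _ Z]) (use p0 irr subX strict len in auto)
qed


lemma smooth_B:
  fixes p :: "'v::finite \<Rightarrow> 'k::field" and E :: "'v \<Rightarrow> 'v \<Rightarrow> bool"
  assumes inf: "infinite (UNIV :: 'k set)"
    and sym: "\<And>x y. E x y \<Longrightarrow> E y x" and irrefl: "\<And>x. \<not> E x x"
    and S: "supp p = S"
    and indep: "\<And>x y. x \<in> S \<Longrightarrow> y \<in> S \<Longrightarrow> \<not> E x y"
    and maxl: "\<And>x. x \<notin> S \<Longrightarrow> \<exists>y\<in>S. E y x"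
  shows "p \<in> smooth_locus UNIV (Xg E)"
proof -
  have pX: "p \<in> Xg E"
  proof -
    have "p x * p y = 0" if "E x y" for x y
      using indep[of x y] that S by (auto simp: supp_def)
    then show ?thesis by (simp add: Xg_iff[OF irrefl])
  qed
  have nbrS: "nbr E S = UNIV - S"
    using indep maxl by (auto simp: nbr_def)
  have "ev ` S \<subseteq> tangent_space UNIV (Xg E) p"
  proof
    fix w :: "'v \<Rightarrow> 'k" assume "w \<in> ev ` S"
    then obtain x where "x \<in> S" "w = ev x" by blast
    then show "w \<in> tangent_space UNIV (Xg E) p"
      using tangent_ev[OF inf sym irrefl pX, of x] nbrS S by auto
  qed
  then have d1: "card S \<le> fvs.dim (tangent_space UNIV (Xg E) p)" by (rule dim_ge)
  have "tangent_space UNIV (Xg E) p \<subseteq> {w. \<forall>y\<in>UNIV - S. w y = 0}"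
  proof (intro subsetI CollectI ballI)
    fix w y assume w: "w \<in> tangent_space UNIV (Xg E) p" and y: "y \<in> UNIV - S"
    obtain x where x: "x \<in> S" "E x y" using maxl y by blast
    have "p x \<noteq> 0" using x S by (auto simp: supp_def)
    then show "w y = 0" using tangent_zero[OF irrefl pX _ x(2) w] by simp
  qed
  then have "fvs.dim (tangent_space UNIV (Xg E) p) \<le> card (UNIV - (UNIV - S))" by (rule dim_le)
  then have dT: "fvs.dim (tangent_space UNIV (Xg E) p) = card S" using d1 by (simp add: Diff_Diff_Int)
  have lower: "card S \<in> LDset (Xg E) p" using ld_lower[OF inf irrefl pX] S by simp
  have upper: "r \<le> card S" if rL: "r \<in> LDset (Xg E) p" for r
  proof -
    obtain C where C: "\<forall>x y. E x y \<longrightarrow> x \<in> C \<or> y \<in> C" "\<forall>x\<in>C. p x = 0" "r \<le> card (UNIV - C)"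
      using ld_upper[where E=E, OF irrefl rL] by blast
    have "UNIV - C \<subseteq> S"
    proof
      fix y assume "y \<in> UNIV - C"
      show "y \<in> S"
      proof (rule ccontr)
        assume "y \<notin> S"
        then obtain x where x: "x \<in> S" "E x y" using maxl by blast
        then have "x \<notin> C" using C(2) S by (auto simp: supp_def)
        with C(1) x(2) \<open>y \<in> UNIV - C\<close> show False by blast
      qed
    qed
    then have "card (UNIV - C) \<le> card S" by (rule card_mono[rotated]) simp
    with C(3) show ?thesis by simp
  qed
  have "local_dim UNIV (Xg E) p = card S"
    unfolding local_dim_LD by (rule cSup_eq_maximum[OF lower upper])
  then show ?thesis using pX dT by (simp add: smooth_locus_def)
qed

lemma smooth_A:
  fixes p :: "'v::finite \<Rightarrow> 'k::field" and E :: "'v \<Rightarrow> 'v \<Rightarrow> bool"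
  assumes inf: "infinite (UNIV :: 'k set)"
    and sym: "\<And>x y. E x y \<Longrightarrow> E y x" and irrefl: "\<And>x. \<not> E x x"
    and sm: "p \<in> smooth_locus UNIV (Xg E)" and uv: "E u v"
  shows "u \<in> nbr E (supp p) \<or> v \<in> nbr E (supp p)"
proof (rule ccontr)
  assume nuv: "\<not> (u \<in> nbr E (supp p) \<or> v \<in> nbr E (supp p))"
  let ?N = "nbr E (supp p)"
  have pX: "p \<in> Xg E" using sm by (simp add: smooth_locus_def)
  have eq: "fvs.dim (tangent_space UNIV (Xg E) p) = local_dim UNIV (Xg E) p"
    using sm by (simp add: smooth_locus_def)
  have "ev ` (UNIV - ?N) \<subseteq> tangent_space UNIV (Xg E) p"
    using tangent_ev[OF inf sym irrefl pX] by auto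
  then have d1: "card (UNIV - ?N) \<le> fvs.dim (tangent_space UNIV (Xg E) p)" by (rule dim_ge)
  have "UNIV - ?N \<noteq> {}" using nuv by blast
  then have cpos: "card (UNIV - ?N) \<ge> 1" by (simp add: Suc_le_eq card_gt_0_iff)
  have "local_dim UNIV (Xg E) p \<le> card (UNIV - ?N) - 1"
  proof (rule local_dim_le)
    fix r assume rL: "r \<in> LDset (Xg E) p"
    obtain C where C: "\<forall>x y. E x y \<longrightarrow> x \<in> C \<or> y \<in> C" "\<forall>x\<in>C. p x = 0" "r \<le> card (UNIV - C)"
      using ld_upper[where E=E, OF irrefl rL] by blast
    have NC: "?N \<subseteq> C"
    proof
      fix y assume "y \<in> ?N"
      then obtain x where x: "p x \<noteq> 0" "E x y" by (auto simp: nbr_def supp_def)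
      then have "x \<notin> C" using C(2) by auto
      with C(1) x(2) show "y \<in> C" by blast
    qed
    obtain w where w: "w \<in> C" "w \<notin> ?N" using C(1) uv nuv by blast
    have "UNIV - C \<subseteq> (UNIV - ?N) - {w}" using NC w by blast
    then have "card (UNIV - C) \<le> card ((UNIV - ?N) - {w})" by (rule card_mono[rotated]) simp
    also have "\<dots> = card (UNIV - ?N) - 1" using w by simp
    finally show "r \<le> card (UNIV - ?N) - 1" using C(3) by simp
  qed
  with d1 eq cpos show False by simp
qed

lemma coeff_arc: "coeff (jet_arc s a v) l = (if l \<le> s then a (v, l) else 0)"
  by (simp add: jet_arc_def coeff_sum coeff_monom)

lemma arc_prod_coeff:
  fixes a :: "'v \<times> nat \<Rightarrow> 'k::comm_ring_1"
  assumes irrefl: "\<And>x. \<not> E x x" and a: "a \<in> jet_scheme s (edge_gens E)" and E: "E x y" and l: "l \<le> s"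
  shows "coeff (jet_arc s a x * jet_arc s a y) l = 0"
proof -
  have xy: "x \<noteq> y" using irrefl E by blast
  have "(mp_xy x y :: ('v, 'k) mpoly) \<in> edge_gens E" using E by (auto simp: edge_gens_def)
  then have "coeff (mp_eval_with (\<lambda>c. [:c:]) (mp_xy x y :: ('v, 'k) mpoly) (jet_arc s a)) l = 0"
    using a l by (auto simp: jet_scheme_def)
  then show ?thesis by (simp add: eval_with_mp_xy[OF xy])
qed

lemma jet_zero:
  fixes a :: "'v \<times> nat \<Rightarrow> 'k::idom"
  assumes irrefl: "\<And>x. \<not> E x x" and a: "a \<in> jet_scheme s (edge_gens E)" and E: "E x y"
    and ax: "a (x, 0) \<noteq> 0"
  shows "l \<le> s \<Longrightarrow> a (y, l) = 0"
proof (induction l rule: less_induct)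
  case (less l)
  have "0 = coeff (jet_arc s a x * jet_arc s a y) l"
    using arc_prod_coeff[OF irrefl a E less.prems] by simp
  also have "\<dots> = (\<Sum>i\<le>l. coeff (jet_arc s a x) i * coeff (jet_arc s a y) (l - i))"
    by (rule coeff_mult)
  also have "\<dots> = (\<Sum>i\<le>l. if i = 0 then a (x, 0) * a (y, l) else 0)"
  proof (rule sum.cong[OF refl])
    fix i assume i: "i \<in> {..l}"
    show "coeff (jet_arc s a x) i * coeff (jet_arc s a y) (l - i) = (if i = 0 then a (x, 0) * a (y, l) else 0)"
    proof (cases "i = 0")
      case True then show ?thesis using less.prems by (simp add: coeff_arc)
    next
      case False
      then have "a (y, l - i) = 0" using less.IH[of "l - i"] less.prems i by auto
      then show ?thesis using False by (simp add: coeff_arc)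
    qed
  qed
  also have "\<dots> = a (x, 0) * a (y, l)" by simp
  finally show ?case using ax by simp
qed

lemma ideal_gen_0: "0 \<in> ideal_gen V F"
  unfolding ideal_gen_def by (rule CollectI, rule exI[of _ "{}"]) auto

lemma ideal_gen_add:
  assumes "f \<in> ideal_gen V F" "g \<in> ideal_gen V F"
  shows "f + g \<in> ideal_gen V F"
proof -
  obtain S1 c1 where 1: "finite S1" "S1 \<subseteq> F" "\<forall>h\<in>S1. c1 h \<in> polys V" "f = (\<Sum>h\<in>S1. c1 h * h)"
    using assms(1) by (auto simp: ideal_gen_def)
  obtain S2 c2 where 2: "finite S2" "S2 \<subseteq> F" "\<forall>h\<in>S2. c2 h \<in> polys V" "g = (\<Sum>h\<in>S2. c2 h * h)"
    using assms(2) by (auto simp: ideal_gen_def)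
  define c where "c h = (if h \<in> S1 then c1 h else 0) + (if h \<in> S2 then c2 h else 0)" for h
  have z: "0 \<in> polys V" by (simp add: polys_def mp_vars_def)
  have cp: "\<forall>h\<in>S1 \<union> S2. c h \<in> polys V"
    using 1(3) 2(3) z by (auto simp: c_def intro!: polys_add)
  have s1: "(\<Sum>h\<in>S1 \<union> S2. (if h \<in> S1 then c1 h else 0) * h) = (\<Sum>h\<in>S1. c1 h * h)"
    by (rule sum.mono_neutral_cong_right) (use 1(1) 2(1) in auto)
  have s2: "(\<Sum>h\<in>S1 \<union> S2. (if h \<in> S2 then c2 h else 0) * h) = (\<Sum>h\<in>S2. c2 h * h)"
    by (rule sum.mono_neutral_cong_right) (use 1(1) 2(1) in auto)
  have "f + g = (\<Sum>h\<in>S1 \<union> S2. c h * h)"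
    unfolding c_def distrib_right sum.distrib s1 s2 1(4) 2(4) ..
  then show ?thesis unfolding ideal_gen_def using 1 2 cp
    by (intro CollectI exI[of _ "S1 \<union> S2"] exI[of _ c]) auto
qed

lemma ideal_gen_sum:
  assumes "\<And>i. i \<in> I \<Longrightarrow> f i \<in> ideal_gen V F"
  shows "(\<Sum>i\<in>I. f i) \<in> ideal_gen V F"
  using assms
proof (induction I rule: infinite_finite_induct)
  case (insert x F) then show ?case by (simp add: ideal_gen_add)
qed (auto simp: ideal_gen_0)

lemma ideal_gen_single:
  assumes "g \<in> F" "c \<in> polys V"
  shows "c * g \<in> ideal_gen V F"
  unfolding ideal_gen_def using assms
  by (intro CollectI exI[of _ "{g}"] exI[of _ "\<lambda>_. c"]) auto


lemma mono_to_ideal: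
  fixes m :: "('v \<times> nat) \<Rightarrow>\<^sub>0 nat" and c :: "'k::comm_ring_1"
  assumes E: "E x y" and irrefl: "\<And>x. \<not> E x x" and i: "i \<le> s" and j: "j \<le> s"
    and mx: "(x, i) \<in> Poly_Mapping.keys m" and my: "(y, j) \<in> Poly_Mapping.keys m"
    and km: "Poly_Mapping.keys m \<subseteq> jet_vars s"
  shows "Poly_Mapping.single m c \<in> ideal_gen (jet_vars s) (edge_gens (PC_edges s E))"
proof -
  have xy: "(x, i) \<noteq> (y, j)" using irrefl E by auto
  define e where "e = Poly_Mapping.single (x, i) (1::nat) + Poly_Mapping.single (y, j) 1"
  have me: "(m - e) + e = m"
  proof (rule poly_mapping_eqI)
    fix z
    show "Poly_Mapping.lookup (m - e + e) z = Poly_Mapping.lookup m z"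
      using mx my xy by (auto simp: e_def lookup_add lookup_minus lookup_single when_def in_keys_iff)
  qed
  have "Poly_Mapping.single m c = Poly_Mapping.single (m - e) c * (mp_xy (x, i) (y, j) :: ('v \<times> nat, 'k) mpoly)"
    by (simp only: mp_xy_def mult_single e_def[symmetric] me mult_1_right)
  moreover have "(mp_xy (x, i) (y, j) :: ('v \<times> nat, 'k) mpoly) \<in> edge_gens (PC_edges s E)"
    using E i j by (auto simp: edge_gens_def PC_edges_def)
  moreover have "Poly_Mapping.single (m - e) c \<in> polys (jet_vars s)"
  proof -
    have "Poly_Mapping.keys (m - e) \<subseteq> Poly_Mapping.keys m"
      by (auto simp: in_keys_iff lookup_minus)
    then show ?thesis using km by (auto simp: polys_def mp_vars_def)
  qed
  ultimately show ?thesis by (simp add: ideal_gen_single)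
qed

theorem mainTheorem8:
  fixes E :: "'v::finite \<Rightarrow> 'v \<Rightarrow> bool" and s :: nat
  assumes sym: "\<And>x y. E x y \<Longrightarrow> E y x"
    and irrefl: "\<And>x. \<not> E x x"
    and connected: "\<And>x y. E\<^sup>*\<^sup>* x y"
    and has_edge: "\<exists>x y. E x y"
  shows "vanishing_ideal (jet_vars s) (principal_component s E :: ('v \<times> nat \<Rightarrow> 'k::alg_closed_field) set)
         = ideal_gen (jet_vars s) (edge_gens (PC_edges s E))"
proof -
  have inf: "infinite (UNIV :: 'k set)" by (rule infinite_alg_closed)
  define A where "A = {a \<in> jet_scheme s (edge_gens E :: ('v, 'k) mpoly set).
      jet_proj a \<in> smooth_locus UNIV (Xg E :: ('v \<Rightarrow> 'k) set)}"
  have PC: "(principal_component s E :: ('v \<times> nat \<Rightarrow> 'k) set) = zariski_closure (jet_vars s) A"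
    by (simp add: principal_component_def Let_def Xg_def A_def)
  have Aaff: "A \<subseteq> aff_space (jet_vars s)" by (auto simp: A_def jet_scheme_def)
  have APC: "A \<subseteq> principal_component s E" unfolding PC by (rule subset_closure[OF Aaff])
  have gen_van: "mp_eval (mp_xy (x, i) (y, j) :: ('v \<times> nat, 'k) mpoly) a = 0"
    if E: "E x y" and i: "i \<le> s" and j: "j \<le> s" and a: "a \<in> principal_component s E" for x y i j a
  proof -
    have xy: "(x, i) \<noteq> (y, j)" using irrefl E by auto
    have "(mp_xy (x, i) (y, j) :: ('v \<times> nat, 'k) mpoly) \<in> vanishing_ideal (jet_vars s) A"
      unfolding vanishing_ideal_def
    proof (intro CollectI conjI ballI)
      show "(mp_xy (x, i) (y, j) :: ('v \<times> nat, 'k) mpoly) \<in> polys (jet_vars s)"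
        using i j by (simp add: polys_def vars_mp_xy[OF xy] jet_vars_def)
      fix b assume b: "b \<in> A"
      then have bj: "b \<in> jet_scheme s (edge_gens E)" and sm: "jet_proj b \<in> smooth_locus UNIV (Xg E)"
        by (auto simp: A_def)
      have "x \<in> nbr E (supp (jet_proj b)) \<or> y \<in> nbr E (supp (jet_proj b))"
        by (rule smooth_A[OF inf sym irrefl sm E])
      then have "b (x, i) = 0 \<or> b (y, j) = 0"
      proof
        assume "x \<in> nbr E (supp (jet_proj b))"
        then obtain z where "E z x" "b (z, 0) \<noteq> 0" by (auto simp: nbr_def supp_def jet_proj_def)
        then show ?thesis using jet_zero[OF irrefl bj, of z x i] i by simp
      next
        assume "y \<in> nbr E (supp (jet_proj b))"
        then obtain z where "E z y" "b (z, 0) \<noteq> 0" by (auto simp: nbr_def supp_def jet_proj_def)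
        then show ?thesis using jet_zero[OF irrefl bj, of z y j] j by simp
      qed
      then show "mp_eval (mp_xy (x, i) (y, j) :: ('v \<times> nat, 'k) mpoly) b = 0"
        by (auto simp: eval_mp_xy[OF xy])
    qed
    then show ?thesis using a unfolding PC by (auto simp: zariski_closure_def zero_set_def)
  qed
  show ?thesis
  proof
    show "vanishing_ideal (jet_vars s) (principal_component s E :: ('v \<times> nat \<Rightarrow> 'k) set)
          \<subseteq> ideal_gen (jet_vars s) (edge_gens (PC_edges s E))"
    proof
      fix f :: "('v \<times> nat, 'k) mpoly"
      assume f: "f \<in> vanishing_ideal (jet_vars s) (principal_component s E)"
      have fpol: "f \<in> polys (jet_vars s)" and fvan: "\<And>a. a \<in> principal_component s E \<Longrightarrow> mp_eval f a = 0"
        using f by (auto simp: vanishing_ideal_def)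
      have kmj: "Poly_Mapping.keys m \<subseteq> jet_vars s" if "m \<in> Poly_Mapping.keys f" for m
        using fpol that by (auto simp: polys_def mp_vars_def)
      have key: "\<exists>x i y j. E x y \<and> i \<le> s \<and> j \<le> s \<and> (x, i) \<in> Poly_Mapping.keys m \<and> (y, j) \<in> Poly_Mapping.keys m"
        if m: "m \<in> Poly_Mapping.keys f" for m
      proof (rule ccontr)
        assume nokey: "\<not> ?thesis"
        define P where "P = {v. \<exists>l. (v, l) \<in> Poly_Mapping.keys m}"
        have Pl: "l \<le> s" if "(v, l) \<in> Poly_Mapping.keys m" for v l
          using kmj[OF m] that by (auto simp: jet_vars_def)
        have Pind: "\<not> E x y" if "x \<in> P" "y \<in> P" for x y
        proof -
          from that obtain l l' where ll: "(x, l) \<in> Poly_Mapping.keys m" "(y, l') \<in> Poly_Mapping.keys m"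
            by (auto simp: P_def)
          then show ?thesis using nokey Pl[OF ll(1)] Pl[OF ll(2)] by blast
        qed
        define Fam where "Fam = {T. P \<subseteq> T \<and> (\<forall>x\<in>T. \<forall>y\<in>T. \<not> E x y)}"
        have "finite Fam" by simp
        moreover have "Fam \<noteq> {}" using Pind by (auto simp: Fam_def)
        ultimately obtain S where S: "S \<in> Fam" and Smax: "\<And>T. T \<in> Fam \<Longrightarrow> S \<subseteq> T \<Longrightarrow> S = T"
          using finite_has_maximal[of Fam] by blast
        have PS: "P \<subseteq> S" and Sind: "\<And>x y. x \<in> S \<Longrightarrow> y \<in> S \<Longrightarrow> \<not> E x y"
          using S by (auto simp: Fam_def)
        have Smaxl: "\<exists>y\<in>S. E y x" if "x \<notin> S" for x
        proof (rule ccontr)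
          assume "\<not> (\<exists>y\<in>S. E y x)"
          then have "insert x S \<in> Fam"
            using PS Sind irrefl sym by (auto simp: Fam_def)
          then have "S = insert x S" using Smax by blast
          with that show False by blast
        qed
        define U where "U = S \<times> {..s}"
        have fU: "finite U" by (simp add: U_def)
        have kmU: "Poly_Mapping.keys m \<subseteq> U"
          using PS Pl by (auto simp: U_def P_def)
        show False
        proof (rule lemmaZ[OF inf fU _ m kmU])
          fix a :: "'v \<times> nat \<Rightarrow> 'k"
          assume a0: "\<And>z. z \<notin> U \<Longrightarrow> a z = 0" and a1: "\<And>u. u \<in> U \<Longrightarrow> a u \<noteq> 0"
          have arc0: "jet_arc s a v = 0" if "v \<notin> S" for v
            unfolding jet_arc_def using a0 that by (auto simp: U_def intro!: sum.neutral)
          have aJ: "a \<in> jet_scheme s (edge_gens E)"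
            unfolding jet_scheme_def
          proof (intro CollectI conjI ballI allI impI)
            show "a \<in> aff_space (jet_vars s)"
              using a0 by (auto simp: aff_space_def U_def jet_vars_def)
            fix g :: "('v, 'k) mpoly" and l assume g: "g \<in> edge_gens E" and l: "l \<le> s"
            then obtain x y where gxy: "g = mp_xy x y" "E x y" by (auto simp: edge_gens_def)
            have xy: "x \<noteq> y" using irrefl gxy by auto
            have "x \<notin> S \<or> y \<notin> S" using Sind gxy by blast
            then have "jet_arc s a x * jet_arc s a y = 0" using arc0 by auto
            then show "coeff (mp_eval_with (\<lambda>c. [:c:]) g (jet_arc s a)) l = 0"
              by (auto simp: gxy eval_with_mp_xy[OF xy])
          qed
          have "supp (jet_proj a) = S"
            using a0 a1 by (auto simp: supp_def jet_proj_def U_def)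
          then have "jet_proj a \<in> smooth_locus UNIV (Xg E)"
            using smooth_B[where E=E and p="jet_proj a" and S=S, OF inf sym irrefl] Sind Smaxl by blast
          with aJ have "a \<in> A" by (simp add: A_def)
          then show "mp_eval f a = 0" using APC fvan by blast
        qed
      qed
      have "(\<Sum>m\<in>Poly_Mapping.keys f. Poly_Mapping.single m (Poly_Mapping.lookup f m))
             \<in> ideal_gen (jet_vars s) (edge_gens (PC_edges s E))"
      proof (rule ideal_gen_sum)
        fix m assume m: "m \<in> Poly_Mapping.keys f"
        then obtain x i y j where "E x y" "i \<le> s" "j \<le> s" "(x, i) \<in> Poly_Mapping.keys m" "(y, j) \<in> Poly_Mapping.keys m"
          using key by blast
        then show "Poly_Mapping.single m (Poly_Mapping.lookup f m) \<in> ideal_gen (jet_vars s) (edge_gens (PC_edges s E))"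
          using mono_to_ideal[where E=E, OF _ irrefl] kmj[OF m] by blast
      qed
      then show "f \<in> ideal_gen (jet_vars s) (edge_gens (PC_edges s E))"
        using pm_expand[of f] by simp
    qed
  next
    show "ideal_gen (jet_vars s) (edge_gens (PC_edges s E))
          \<subseteq> vanishing_ideal (jet_vars s) (principal_component s E :: ('v \<times> nat \<Rightarrow> 'k) set)"
    proof
      fix f :: "('v \<times> nat, 'k) mpoly"
      assume "f \<in> ideal_gen (jet_vars s) (edge_gens (PC_edges s E))"
      then obtain G c where G: "finite G" "G \<subseteq> edge_gens (PC_edges s E)"
        "\<forall>g\<in>G. c g \<in> polys (jet_vars s)" "f = (\<Sum>g\<in>G. c g * g)"
        by (auto simp: ideal_gen_def)
      have gform: "\<exists>x i y j. g = mp_xy (x, i) (y, j) \<and> E x y \<and> i \<le> s \<and> j \<le> s" if "g \<in> G" for g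
        using G(2) that by (auto simp: edge_gens_def PC_edges_def)
      have gpol: "g \<in> polys (jet_vars s)" if gG: "g \<in> G" for g
      proof -
        obtain x i y j where g: "g = mp_xy (x, i) (y, j)" "E x y" "i \<le> s" "j \<le> s"
          using gform[OF gG] by blast
        have "(x, i) \<noteq> (y, j)" using irrefl g by auto
        then show ?thesis using g by (simp add: polys_def vars_mp_xy jet_vars_def)
      qed
      have "f \<in> polys (jet_vars s)"
        unfolding G(4) using G(3) gpol by (intro polys_sum polys_mult) auto
      moreover have "mp_eval f a = 0" if a: "a \<in> principal_component s E" for a
      proof -
        have "mp_eval g a = 0" if "g \<in> G" for g
          using gform[OF that] gen_van a by blast
        then show ?thesis unfolding G(4) by (simp add: eval_sum eval_mult)
      qed
      ultimately show "f \<in> vanishing_ideal (jet_vars s) (principal_component s E)"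
        by (simp add: vanishing_ideal_def)
    qed
  qed
qed


end
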